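(* Let $p>1$, $q>1$ with $p^{-1}+q^{-1}>1$. Then the following holds, with a constant $C_{p,q}$ depending only on $p$ and $q$. For every interval $[a;b]$ and every two functions $f,g:[a;b]\to\mathbb{R}$ with no common points of discontinuity such that $f$ has finite $p$-variation and $g$ has finite $q$-variation on $[a;b]$, the Riemann–Stieltjes integral $\int_a^b f\,\mathrm{d}g$ exists and \[ \left|\int_a^b f\,\mathrm{d}g-f(a)\left[g(b)-g(a)\right]\right|\le C_{p,q}\,\|f\|_{p\text{-var},[a;b]}^{\,p-p/q}\,\|f\|_{\mathrm{osc},[a;b]}^{\,1+p/q-p}\,\|g\|_{q\text{-var},[a;b]}. \]
   Context: For $r>0$ the $r$-variation of $h:[a;b]\to\mathbb{R}$ is $V^{r}(h,[a;b])=\sup_n\sup_{a\le t_1<\dots<t_n\le b}\sum_{i=2}^{n}|h(t_i)-h(t_{i-1})|^{r}$, and $\|h\|_{r\text{-var},[a;b]}:=(V^{r}(h,[a;b]))^{1/r}$. Also $\|h\|_{\mathrm{osc},[a;b]}:=\sup_{a\le s<t\le b}|h(t)-h(s)|$. The Riemann–Stieltjes integral $\int_a^b f\,\mathrm{d}g$ exists if the sums $\sum_i f(\nu_i)[g(a_i)-g(a_{i-1})]$ over partitions $a=a_0<\dots<a_l=b$ with tags $\nu_i\in[a_{i-1};a_i]$ converge to a common limit as the mesh tends to $0$, independently of the tags. *)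

theory Defs
  imports "HOL-Analysis.Analysis"
begin

definition rvar_sums :: "real \<Rightarrow> (real \<Rightarrow> real) \<Rightarrow> real \<Rightarrow> real \<Rightarrow> real set" where
  "rvar_sums r h a b =
     {(\<Sum>i<n. \<bar>h (t (Suc i)) - h (t i)\<bar> powr r) | t n.
        (\<forall>i\<le>n. a \<le> t i \<and> t i \<le> b) \<and> (\<forall>i<n. t i < t (Suc i))}"

definition finite_rvar :: "real \<Rightarrow> (real \<Rightarrow> real) \<Rightarrow> real \<Rightarrow> real \<Rightarrow> bool" where
  "finite_rvar r h a b \<longleftrightarrow> bdd_above (rvar_sums r h a b)"

definition rvar :: "real \<Rightarrow> (real \<Rightarrow> real) \<Rightarrow> real \<Rightarrow> real \<Rightarrow> real" where
  "rvar r h a b = Sup (rvar_sums r h a b)"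

definition rvar_norm :: "real \<Rightarrow> (real \<Rightarrow> real) \<Rightarrow> real \<Rightarrow> real \<Rightarrow> real" where
  "rvar_norm r h a b = rvar r h a b powr (1 / r)"

definition osc_norm :: "(real \<Rightarrow> real) \<Rightarrow> real \<Rightarrow> real \<Rightarrow> real" where
  "osc_norm h a b = Sup {\<bar>h t - h s\<bar> | s t. a \<le> s \<and> s \<le> t \<and> t \<le> b}"

definition tagged_partition :: "real \<Rightarrow> real \<Rightarrow> (nat \<Rightarrow> real) \<Rightarrow> (nat \<Rightarrow> real) \<Rightarrow> nat \<Rightarrow> bool" where
  "tagged_partition a b x \<nu> l \<longleftrightarrow> x 0 = a \<and> x l = b \<and>
     (\<forall>i<l. x i < x (Suc i) \<and> x i \<le> \<nu> i \<and> \<nu> i \<le> x (Suc i))"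

definition mesh_less :: "(nat \<Rightarrow> real) \<Rightarrow> nat \<Rightarrow> real \<Rightarrow> bool" where
  "mesh_less x l \<delta> \<longleftrightarrow> (\<forall>i<l. x (Suc i) - x i < \<delta>)"

definition RS_sum :: "(real \<Rightarrow> real) \<Rightarrow> (real \<Rightarrow> real) \<Rightarrow> (nat \<Rightarrow> real) \<Rightarrow> (nat \<Rightarrow> real) \<Rightarrow> nat \<Rightarrow> real" where
  "RS_sum f g x \<nu> l = (\<Sum>i<l. f (\<nu> i) * (g (x (Suc i)) - g (x i)))"

definition RS_has_integral :: "(real \<Rightarrow> real) \<Rightarrow> (real \<Rightarrow> real) \<Rightarrow> real \<Rightarrow> real \<Rightarrow> real \<Rightarrow> bool" where
  "RS_has_integral f g a b I \<longleftrightarrow>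
     (\<forall>\<epsilon>>0. \<exists>\<delta>>0. \<forall>x \<nu> l. tagged_partition a b x \<nu> l \<and> mesh_less x l \<delta> \<longrightarrow>
        \<bar>RS_sum f g x \<nu> l - I\<bar> < \<epsilon>)"

end

theory Submission
  imports Defs
begin

lemma mvt_step:
  fixes x s :: real
  assumes "0 < x" "0 < s" "s \<noteq> 1"
  shows "(x+1) powr (-s) \<le> ((x+1) powr (1-s) - x powr (1-s)) / (1-s)"
proof -
  have d: "\<And>t. x \<le> t \<Longrightarrow> t \<le> x+1 \<Longrightarrow> ((\<lambda>z. z powr (1-s)) has_real_derivative (1-s) * t powr (1-s-1)) (at t)"
    using assms by (intro has_real_derivative_powr) auto
  obtain z where z: "x < z" "z < x+1" "(x+1) powr (1-s) - x powr (1-s) = ((x+1) - x) * ((1-s) * z powr (1-s-1))"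
    using MVT2[of x "x+1" "\<lambda>z. z powr (1-s)" "\<lambda>t. (1-s) * t powr (1-s-1)", OF _ d] by auto
  have "((x+1) powr (1-s) - x powr (1-s)) / (1-s) = z powr (-s)"
    using z(3) assms by (simp add: field_simps)
  moreover have "(x+1) powr (-s) \<le> z powr (-s)"
    using z assms by (intro powr_mono2') auto
  ultimately show ?thesis by simp
qed

lemma sum_S1:
  fixes s :: real
  assumes "0 < s" "s < 1"
  shows "(\<Sum>m\<in>{1..N}. real m powr (-s)) \<le> real N powr (1-s) / (1-s)"
proof (induction N)
  case 0
  then show ?case by simp
next
  case (Suc N)
  have split: "(\<Sum>m\<in>{1..Suc N}. real m powr (-s)) = (\<Sum>m\<in>{1..N}. real m powr (-s)) + real (Suc N) powr (-s)"
    by simp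
  show ?case
  proof (cases "N = 0")
    case True
    then show ?thesis using assms by (simp add: field_simps)
  next
    case False
    have "real (Suc N) powr (-s) \<le> (real (Suc N) powr (1-s) - real N powr (1-s)) / (1-s)"
      using mvt_step[of "real N" s] False assms by (simp add: add.commute)
    moreover have "(real (Suc N) powr (1-s) - real N powr (1-s)) / (1-s) + real N powr (1 - s) / (1 - s)
        = real (Suc N) powr (1-s) / (1-s)" by (simp add: diff_divide_distrib)
    ultimately show ?thesis using Suc split by linarith
  qed
qed

lemma sum_S2:
  fixes th :: real
  assumes "1 < th" "1 \<le> N" "N \<le> M"
  shows "(\<Sum>m\<in>{N<..M}. real m powr (-th)) \<le> (real N powr (1-th) - real M powr (1-th)) / (th-1)"
  using assms(3)
proof (induction M rule: dec_induct)
  case base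
  then show ?case by simp
next
  case (step M)
  have "M \<ge> 1" using step assms by simp
  have "real (Suc M) powr (-th) \<le> (real (Suc M) powr (1-th) - real M powr (1-th)) / (1-th)"
    using mvt_step[of "real M" th] \<open>M \<ge> 1\<close> assms by (simp add: add.commute)
  also have "\<dots> = (real M powr (1-th) - real (Suc M) powr (1-th)) / (th-1)"
    by (metis minus_diff_eq minus_divide_divide)
  finally have "real (Suc M) powr (-th) \<le> (real M powr (1-th) - real (Suc M) powr (1-th)) / (th-1)" .
  moreover have "{N<..Suc M} = insert (Suc M) {N<..M}" using step by auto
  ultimately show ?case using step assms by (simp add: field_simps)
qed

lemma sum_S2':
  fixes th :: real
  assumes "1 < th" "1 \<le> N"
  shows "(\<Sum>m\<in>{N<..M}. real m powr (-th)) \<le> real N powr (1-th) / (th-1)"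
proof (cases "N \<le> M")
  case True
  have "0 \<le> real M powr (1-th)" by simp
  then have "(real N powr (1-th) - real M powr (1-th)) / (th-1) \<le> real N powr (1-th) / (th-1)"
    using assms by (simp add: divide_right_mono)
  then show ?thesis using sum_S2[OF assms True] by linarith
next
  case False
  then have "{N<..M} = {}" by auto
  then show ?thesis using assms by simp
qed

lemma sum_S3:
  fixes th :: real
  assumes "1 < th"
  shows "(\<Sum>m\<in>{1..M}. real m powr (-th)) \<le> th / (th-1)"
proof (cases "M = 0")
  case True
  then show ?thesis using assms by simp
next
  case False
  then have "{1..M} = insert 1 {1<..M}" by auto
  then have "(\<Sum>m\<in>{1..M}. real m powr (-th)) = 1 + (\<Sum>m\<in>{1<..M}. real m powr (-th))" by simp
  also have "\<dots> \<le> 1 + 1 / (th - 1)" using sum_S2'[OF assms, of 1 M] by simp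
  also have "\<dots> = th / (th-1)" using assms by (simp add: field_simps)
  finally show ?thesis .
qed

lemma min_le_powr:
  fixes x y l :: real
  assumes "0 \<le> x" "0 \<le> y" "0 \<le> l" "l \<le> 1"
  shows "min x y \<le> x powr l * y powr (1 - l)"
proof (cases "x \<le> y")
  case True
  have "x = x powr l * x powr (1-l)" using assms by (simp add: powr_add[symmetric])
  also have "\<dots> \<le> x powr l * y powr (1-l)"
    using assms True by (intro mult_left_mono powr_mono2) auto
  finally show ?thesis using True by simp
next
  case False
  have "y = y powr l * y powr (1-l)" using assms by (simp add: powr_add[symmetric])
  also have "\<dots> \<le> x powr l * y powr (1-l)"
    using assms False by (intro mult_right_mono powr_mono2) auto
  finally show ?thesis using False by simp
qed

lemma powr_interp_le_sum:
  fixes x y l :: real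
  assumes "0 \<le> x" "0 \<le> y" "0 \<le> l" "l \<le> 1"
  shows "x powr l * y powr (1 - l) \<le> x + y"
proof -
  have "x powr l * y powr (1 - l) \<le> (x+y) powr l * (x+y) powr (1-l)"
    using assms by (intro mult_mono powr_mono2) auto
  also have "\<dots> = x + y" using assms by (simp add: powr_add[symmetric])
  finally show ?thesis .
qed


lemma genG:
  fixes s th c w A :: real
  assumes s: "0 < s" "s < 1" and th: "1 < th" and c: "0 < c" and w: "0 \<le> w" and A: "0 \<le> A"
  shows "(\<Sum>m\<in>{1..M}. min (w * real m powr (-s)) (c * A * real m powr (-th)))
     \<le> (1/(1-s) + c * 2 powr (th-1) * th/(th-1)) * w powr (1 - (1-s)/(th-s)) * A powr ((1-s)/(th-s))"
proof -
  define al where "al = (1-s)/(th-s)"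
  have al: "0 < al" "al < 1" using s th by (auto simp: al_def field_simps)
  define K where "K = 1/(1-s) + c * 2 powr (th-1) * th/(th-1)"
  have K: "c * th/(th-1) \<le> K" "1/(1-s) \<le> K" "0 < K"
  proof -
    have "1 \<le> 2 powr (th-1)" using th by (intro ge_one_powr_ge_zero) auto
    then have "c * th/(th-1) \<le> c * 2 powr (th-1) * th/(th-1)"
      using c th by (simp add: divide_right_mono mult_right_mono)
    moreover have "0 < 1/(1-s)" "0 \<le> c * 2 powr (th-1) * th/(th-1)" using s c th by auto
    ultimately show "c * th/(th-1) \<le> K" "1/(1-s) \<le> K" "0 < K" unfolding K_def by linarith+
  qed
  let ?F = "\<lambda>m::nat. min (w * real m powr (-s)) (c * A * real m powr (-th))"
  show ?thesis
  proof (cases "w = 0 \<or> A = 0")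
    case True
    have "sum ?F {1..M} \<le> sum (\<lambda>m. 0) {1..M}"
    proof (rule sum_mono)
      fix m assume "m \<in> {1..M}"
      show "?F m \<le> 0" using True by (auto simp: min_def)
    qed
    moreover have "0 \<le> K * w powr (1-al) * A powr al" using K by simp
    ultimately show ?thesis by (simp add: al_def[symmetric] K_def[symmetric])
  next
    case False
    then have w0: "0 < w" and A0: "0 < A" using w A by auto
    show ?thesis
    proof (cases "A \<le> w")
      case True
      have "sum ?F {1..M} \<le> (\<Sum>m\<in>{1..M}. c * A * real m powr (-th))"
        by (rule sum_mono) simp
      also have "\<dots> = c * A * (\<Sum>m\<in>{1..M}. real m powr (-th))" by (simp add: sum_distrib_left)
      also have "\<dots> \<le> c * A * (th/(th-1))"
        using sum_S3[OF th, of M] c A by (intro mult_left_mono) auto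
      also have "\<dots> = (c * th/(th-1)) * A" by simp
      also have "\<dots> \<le> K * A" using K A by (intro mult_right_mono) auto
      finally have s1: "sum ?F {1..M} \<le> K * A" .
      have "A = A powr al * A powr (1 - al)" using A by (simp add: powr_add[symmetric])
      also have "\<dots> \<le> A powr al * w powr (1-al)" using A True al by (intro mult_left_mono powr_mono2) auto
      finally have "K * A \<le> K * (A powr al * w powr (1-al))" using K by (intro mult_left_mono) auto
      with s1 have "sum ?F {1..M} \<le> K * (A powr al * w powr (1-al))" by linarith
      then show ?thesis unfolding al_def[symmetric] K_def[symmetric] by (simp add: mult_ac)
    next
      case False
      define m0 where "m0 = (A/w) powr (1/(th-s))"
      have Aw: "1 < A/w" using False w0 by simp
      have m0: "1 < m0" unfolding m0_def using Aw s th by (intro gr_one_powr) auto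
      define N where "N = nat (floor m0)"
      have N1: "1 \<le> N" using m0 by (simp add: N_def le_nat_iff)
      have Nle: "real N \<le> m0" using m0 by (simp add: N_def)
      have Nge: "m0 / 2 \<le> real N"
      proof -
        have "m0 < real N + 1" using m0 by (simp add: N_def)
        then show ?thesis using N1 by linarith
      qed
      define M' where "M' = max M N"
      have t1: "sum ?F {1..M} \<le> sum ?F {1..M'}"
        by (rule sum_mono2) (use c w A in \<open>auto simp: M'_def\<close>)
      have u: "{1..M'} = {1..N} \<union> {N<..M'}" by (auto simp: M'_def)
      have "sum ?F ({1..N} \<union> {N<..M'}) = sum ?F {1..N} + sum ?F {N<..M'}"
        by (rule sum.union_disjoint) auto
      then have t2: "sum ?F {1..M'} = sum ?F {1..N} + sum ?F {N<..M'}" by (simp only: u)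
      have "sum ?F {1..N} \<le> (\<Sum>m\<in>{1..N}. w * real m powr (-s))"
        by (rule sum_mono) simp
      also have "\<dots> = w * (\<Sum>m\<in>{1..N}. real m powr (-s))" by (simp add: sum_distrib_left)
      also have "\<dots> \<le> w * (real N powr (1-s) / (1-s))"
        using sum_S1[OF s, of N] w by (intro mult_left_mono) auto
      also have "\<dots> \<le> w * (m0 powr (1-s) / (1-s))"
        using Nle s w by (intro mult_left_mono divide_right_mono powr_mono2) auto
      finally have t3: "sum ?F {1..N} \<le> w * (m0 powr (1-s) / (1-s))" .
      have "sum ?F {N<..M'} \<le> (\<Sum>m\<in>{N<..M'}. c * A * real m powr (-th))"
        by (rule sum_mono) simp
      also have "\<dots> = c * A * (\<Sum>m\<in>{N<..M'}. real m powr (-th))" by (simp add: sum_distrib_left)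
      also have "\<dots> \<le> c * A * (real N powr (1-th) / (th-1))"
        using sum_S2'[OF th N1, of M'] c A by (intro mult_left_mono) auto
      also have "\<dots> \<le> c * A * ((m0/2) powr (1-th) / (th-1))"
        using Nge th c A m0 by (intro mult_left_mono divide_right_mono powr_mono2') auto
      finally have t4: "sum ?F {N<..M'} \<le> c * A * ((m0/2) powr (1-th) / (th-1))" .
      have bound: "sum ?F {1..M} \<le> w * (m0 powr (1-s) / (1-s)) + c * A * ((m0/2) powr (1-th) / (th-1))"
        using t1 t2 t3 t4 by linarith
      have e1: "w * m0 powr (1-s) = w powr (1-al) * A powr al"
      proof -
        have "m0 powr (1-s) = (A/w) powr (1/(th-s)*(1-s))" unfolding m0_def by (rule powr_powr)
        also have "1/(th-s)*(1-s) = al" by (simp add: al_def)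
        also have "(A/w) powr al = A powr al / w powr al" using A0 w0 by (simp add: powr_divide)
        finally have m: "m0 powr (1-s) = A powr al / w powr al" .
        have "w powr (1-al) = w / w powr al" using powr_diff[of w 1 al] w0 by simp
        then show ?thesis unfolding m by simp
      qed
      have e2: "A * m0 powr (1-th) = w powr (1-al) * A powr al"
      proof -
        have "m0 powr (1-th) = (A/w) powr (1/(th-s)*(1-th))" unfolding m0_def by (rule powr_powr)
        also have "1/(th-s)*(1-th) = al - 1" unfolding al_def using s th by (simp add: field_simps)
        also have "(A/w) powr (al - 1) = A powr (al - 1) / w powr (al - 1)" using A0 w0 by (simp add: powr_divide)
        finally have m: "m0 powr (1-th) = A powr (al - 1) / w powr (al - 1)" .
        have a1: "A powr al = A * A powr (al-1)" using powr_add[of A 1 "al-1"] A0 by simp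
        have a2: "w powr (1-al) = inverse (w powr (al-1))" using powr_minus[of w "al-1"] by simp
        show ?thesis unfolding m a1 a2 by (simp add: divide_inverse mult_ac)
      qed
      have e3: "(m0/2) powr (1-th) = 2 powr (th-1) * m0 powr (1-th)"
      proof -
        have d: "(m0/2) powr (1-th) = m0 powr (1-th) / 2 powr (1-th)" using m0 by (intro powr_divide)
        have i: "2 powr (th-1) = inverse (2 powr (1-th))" using powr_minus[of 2 "1-th"] by (simp only: minus_diff_eq)
        show ?thesis by (metis d i divide_inverse mult.commute)
      qed
      have "w * (m0 powr (1-s) / (1-s)) + c * A * ((m0/2) powr (1-th) / (th-1))
          = (1/(1-s)) * (w * m0 powr (1-s)) + (c * 2 powr (th-1) / (th-1)) * (A * m0 powr (1-th))"
        unfolding e3 by (simp add: algebra_simps)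
      also have "\<dots> = (1/(1-s) + c * 2 powr (th-1) / (th-1)) * (w powr (1-al) * A powr al)"
        unfolding e1 e2 by (simp add: algebra_simps)
      also have "\<dots> \<le> K * (w powr (1-al) * A powr al)"
      proof -
        have "c * 2 powr (th-1) / (th-1) \<le> c * 2 powr (th-1) * th/(th-1)"
          using th c by (simp add: divide_right_mono mult_left_mono)
        then show ?thesis unfolding K_def by (intro mult_right_mono) auto
      qed
      finally have "sum ?F {1..M} \<le> K * (w powr (1-al) * A powr al)" using bound by linarith
      then show ?thesis unfolding al_def[symmetric] K_def[symmetric] by (simp add: mult_ac)
    qed
  qed
qed


lemma chain_le:
  fixes x :: "nat \<Rightarrow> real"
  assumes "\<forall>i<n. x i \<le> x (Suc i)" "j \<le> k" "k \<le> n"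
  shows "x j \<le> x k"
  using assms(2,3)
proof (induction k)
  case 0 then show ?case by simp
next
  case (Suc k)
  show ?case
  proof (cases "j = Suc k")
    case True then show ?thesis by simp
  next
    case False
    then have "j \<le> k" using Suc.prems by simp
    then have "x j \<le> x k" using Suc by simp
    also have "x k \<le> x (Suc k)" using assms(1) Suc.prems by simp
    finally show ?thesis .
  qed
qed

lemma chain_less:
  fixes x :: "nat \<Rightarrow> real"
  assumes "\<forall>i<n. x i < x (Suc i)" "j < k" "k \<le> n"
  shows "x j < x k"
  using assms(2,3)
proof (induction k)
  case 0 then show ?case by simp
next
  case (Suc k)
  show ?case
  proof (cases "j = k")
    case True then show ?thesis using assms(1) Suc.prems by simp
  next
    case False
    then have "j < k" using Suc.prems by simp
    then have "x j < x k" using Suc by simp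
    also have "x k < x (Suc k)" using assms(1) Suc.prems by simp
    finally show ?thesis .
  qed
qed

lemma nondecr_to_strict:
  fixes t :: "nat \<Rightarrow> real" and h :: "real \<Rightarrow> real"
  assumes r: "0 < r"
    and rng: "\<forall>i\<le>m. u \<le> t i \<and> t i \<le> v" and mono: "\<forall>i<m. t i \<le> t (Suc i)"
  shows "\<exists>t' m'. (\<forall>i\<le>m'. u \<le> t' i \<and> t' i \<le> v) \<and> (\<forall>i<m'. t' i < t' (Suc i)) \<and> t' m' = t m \<and>
     (\<Sum>i<m'. \<bar>h (t' (Suc i)) - h (t' i)\<bar> powr r) = (\<Sum>i<m. \<bar>h (t (Suc i)) - h (t i)\<bar> powr r)"
  using rng mono
proof (induction m)
  case 0
  show ?case by (rule exI[of _ t], rule exI[of _ 0]) (use 0 in auto)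
next
  case (Suc m)
  from Suc.prems have "\<forall>i\<le>m. u \<le> t i \<and> t i \<le> v" "\<forall>i<m. t i \<le> t (Suc i)" by auto
  from Suc.IH[OF this] obtain t' m' where
    t': "\<forall>i\<le>m'. u \<le> t' i \<and> t' i \<le> v" "\<forall>i<m'. t' i < t' (Suc i)" "t' m' = t m"
      "(\<Sum>i<m'. \<bar>h (t' (Suc i)) - h (t' i)\<bar> powr r) = (\<Sum>i<m. \<bar>h (t (Suc i)) - h (t i)\<bar> powr r)"
    by blast
  have le: "t m \<le> t (Suc m)" using Suc.prems by auto
  show ?case
  proof (cases "t m = t (Suc m)")
    case True
    then show ?thesis using t' r by (intro exI[of _ t'] exI[of _ m']) auto
  next
    case False
    with le have lt: "t m < t (Suc m)" by simp
    define t'' where "t'' = t'(Suc m' := t (Suc m))"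
    have s: "(\<Sum>i<m'. \<bar>h (t'' (Suc i)) - h (t'' i)\<bar> powr r) = (\<Sum>i<m'. \<bar>h (t' (Suc i)) - h (t' i)\<bar> powr r)"
      by (rule sum.cong) (auto simp: t''_def)
    show ?thesis
    proof (intro exI[of _ t''] exI[of _ "Suc m'"] conjI)
      show "\<forall>i\<le>Suc m'. u \<le> t'' i \<and> t'' i \<le> v" using t'(1) Suc.prems(1) by (auto simp: t''_def le_Suc_eq)
      show "\<forall>i<Suc m'. t'' i < t'' (Suc i)" using t'(2,3) lt by (auto simp: t''_def less_Suc_eq)
      show "t'' (Suc m') = t (Suc m)" by (simp add: t''_def)
      show "(\<Sum>i<Suc m'. \<bar>h (t'' (Suc i)) - h (t'' i)\<bar> powr r) = (\<Sum>i<Suc m. \<bar>h (t (Suc i)) - h (t i)\<bar> powr r)"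
        using s t'(3,4) by (simp add: t''_def)
    qed
  qed
qed

lemma nondecr_in_rvar_sums:
  fixes t :: "nat \<Rightarrow> real" and h :: "real \<Rightarrow> real"
  assumes r: "0 < r"
    and rng: "\<forall>i\<le>m. u \<le> t i \<and> t i \<le> v" and mono: "\<forall>i<m. t i \<le> t (Suc i)"
  shows "(\<Sum>i<m. \<bar>h (t (Suc i)) - h (t i)\<bar> powr r) \<in> rvar_sums r h u v"
proof -
  obtain t' m' where tm: "(\<forall>i\<le>m'. u \<le> t' i \<and> t' i \<le> v) \<and> (\<forall>i<m'. t' i < t' (Suc i))"
     "(\<Sum>i<m'. \<bar>h (t' (Suc i)) - h (t' i)\<bar> powr r) = (\<Sum>i<m. \<bar>h (t (Suc i)) - h (t i)\<bar> powr r)"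
    using nondecr_to_strict[OF assms, of h] by metis
  show ?thesis unfolding rvar_sums_def
    by (rule CollectI, rule exI[of _ t'], rule exI[of _ m']) (use tm in simp)
qed

lemma rvar_sums_zero: "u \<le> v \<Longrightarrow> 0 \<in> rvar_sums r h u v"
  unfolding rvar_sums_def by (rule CollectI, rule exI[of _ "\<lambda>_. u"], rule exI[of _ 0]) auto

lemma rvar_sums_single:
  assumes "u \<le> s" "s < t" "t \<le> v"
  shows "\<bar>h t - h s\<bar> powr r \<in> rvar_sums r h u v"
  unfolding rvar_sums_def
  by (rule CollectI, rule exI[of _ "\<lambda>i. if i = 0 then s else t"], rule exI[of _ 1]) (use assms in \<open>auto simp: le_Suc_eq\<close>)

lemma rvar_sums_mono:
  assumes "a \<le> u" "v \<le> b"
  shows "rvar_sums r h u v \<subseteq> rvar_sums r h a b"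
proof
  fix x assume "x \<in> rvar_sums r h u v"
  then obtain t n where tn: "x = (\<Sum>i<n. \<bar>h (t (Suc i)) - h (t i)\<bar> powr r)"
      "\<forall>i\<le>n. u \<le> t i \<and> t i \<le> v" "\<forall>i<n. t i < t (Suc i)"
    unfolding rvar_sums_def by blast
  show "x \<in> rvar_sums r h a b" unfolding rvar_sums_def
    by (rule CollectI, rule exI[of _ t], rule exI[of _ n]) (use tn assms in force)
qed

lemma finite_rvar_sub:
  assumes "finite_rvar r h a b" "a \<le> u" "v \<le> b"
  shows "finite_rvar r h u v"
  using assms rvar_sums_mono[OF assms(2,3)] unfolding finite_rvar_def by (meson bdd_above_mono)

lemma rvar_upper:
  assumes "finite_rvar r h u v" "s \<in> rvar_sums r h u v"
  shows "s \<le> rvar r h u v"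
  using assms unfolding finite_rvar_def rvar_def by (simp add: cSup_upper)

lemma rvar_nonneg:
  assumes "finite_rvar r h u v" "u \<le> v"
  shows "0 \<le> rvar r h u v"
  using rvar_upper[OF assms(1) rvar_sums_zero[OF assms(2)]] .

lemma rvar_single:
  assumes "finite_rvar r h u v" "u \<le> s" "s \<le> t" "t \<le> v" "0 < r"
  shows "\<bar>h t - h s\<bar> powr r \<le> rvar r h u v"
proof (cases "s = t")
  case True
  then show ?thesis using assms rvar_nonneg[OF assms(1)] by simp
next
  case False
  then show ?thesis using assms by (intro rvar_upper rvar_sums_single) auto
qed

lemma powr_le_root:
  fixes a c r :: real
  assumes "0 \<le> a" "0 < r" "a powr r \<le> c"
  shows "a \<le> c powr (1/r)"
proof -
  have "a = (a powr r) powr (1/r)" using assms by (simp add: powr_powr)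
  also have "\<dots> \<le> c powr (1/r)" using assms by (intro powr_mono2) auto
  finally show ?thesis .
qed

lemma rvar_single_abs:
  assumes "finite_rvar r h u v" "u \<le> s" "s \<le> v" "u \<le> t" "t \<le> v" "0 < r"
  shows "\<bar>h t - h s\<bar> \<le> rvar r h u v powr (1/r)"
proof (cases "s \<le> t")
  case True
  then show ?thesis using assms by (intro powr_le_root rvar_single) auto
next
  case False
  then have "\<bar>h s - h t\<bar> \<le> rvar r h u v powr (1/r)" using assms by (intro powr_le_root rvar_single) auto
  then show ?thesis by (simp add: abs_minus_commute)
qed

lemma rvar_superadd:
  assumes fin: "finite_rvar r h u w" and r: "0 < r" and uv: "u \<le> v" and vw: "v \<le> w"
  shows "rvar r h u v + rvar r h v w \<le> rvar r h u w"
proof -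
  have key: "x + y \<le> rvar r h u w" if x: "x \<in> rvar_sums r h u v" and y: "y \<in> rvar_sums r h v w" for x y
  proof -
    obtain t n where tn: "x = (\<Sum>i<n. \<bar>h (t (Suc i)) - h (t i)\<bar> powr r)"
      "\<forall>i\<le>n. u \<le> t i \<and> t i \<le> v" "\<forall>i<n. t i < t (Suc i)"
      using x unfolding rvar_sums_def by blast
    obtain t' n' where tn': "y = (\<Sum>i<n'. \<bar>h (t' (Suc i)) - h (t' i)\<bar> powr r)"
      "\<forall>i\<le>n'. v \<le> t' i \<and> t' i \<le> w" "\<forall>i<n'. t' i < t' (Suc i)"
      using y unfolding rvar_sums_def by blast
    define T where "T i = (if i \<le> n then t i else t' (i - Suc n))" for i
    let ?phi = "\<lambda>T i. \<bar>h (T (Suc i)) - h (T i)\<bar> powr r"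
    have sumeq: "(\<Sum>i<n + Suc k. ?phi T i) = x + ?phi T n + (\<Sum>i<k. ?phi t' i)" for k
    proof (induction k)
      case 0
      have "(\<Sum>i<n. ?phi T i) = (\<Sum>i<n. ?phi t i)" by (rule sum.cong) (auto simp: T_def)
      then show ?case using tn(1) by simp
    next
      case (Suc k)
      have "?phi T (n + Suc k) = ?phi t' k" by (simp add: T_def)
      then show ?case using Suc by simp
    qed
    have "(\<Sum>i<n + Suc n'. ?phi T i) \<in> rvar_sums r h u w"
    proof (rule nondecr_in_rvar_sums[OF r])
      show "\<forall>i\<le>n + Suc n'. u \<le> T i \<and> T i \<le> w"
      proof (intro allI impI)
        fix i assume "i \<le> n + Suc n'"
        show "u \<le> T i \<and> T i \<le> w"
        proof (cases "i \<le> n")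
          case True then show ?thesis using tn(2) uv vw by (auto simp: T_def)
        next
          case False
          then have "i - Suc n \<le> n'" using \<open>i \<le> n + Suc n'\<close> by simp
          then show ?thesis using tn'(2) False uv by (fastforce simp: T_def)
        qed
      qed
      show "\<forall>i<n + Suc n'. T i \<le> T (Suc i)"
      proof (intro allI impI)
        fix i assume i: "i < n + Suc n'"
        consider "i < n" | "i = n" | "n < i" by linarith
        then show "T i \<le> T (Suc i)"
        proof cases
          case 1 then show ?thesis using tn(3) by (auto simp: T_def less_imp_le)
        next
          case 2
          have "t n \<le> v" "v \<le> t' 0" using tn(2) tn'(2) by auto
          then show ?thesis using 2 by (simp add: T_def)
        next
          case 3
          then have "i - Suc n < n'" "Suc i - Suc n = Suc (i - Suc n)" using i by auto
          then show ?thesis using tn'(3) 3 by (auto simp: T_def less_imp_le)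
        qed
      qed
    qed
    then have "x + ?phi T n + y \<le> rvar r h u w" using sumeq[of n'] tn'(1) rvar_upper[OF fin] by simp
    moreover have "0 \<le> ?phi T n" by simp
    ultimately show ?thesis by linarith
  qed
  have ne1: "rvar_sums r h u v \<noteq> {}" using rvar_sums_zero[OF uv] by blast
  have ne2: "rvar_sums r h v w \<noteq> {}" using rvar_sums_zero[OF vw] by blast
  have "rvar r h u v \<le> rvar r h u w - rvar r h v w"
    unfolding rvar_def
  proof (rule cSup_least[OF ne1])
    fix x assume x: "x \<in> rvar_sums r h u v"
    have "Sup (rvar_sums r h v w) \<le> rvar r h u w - x"
    proof (rule cSup_least[OF ne2])
      fix y assume "y \<in> rvar_sums r h v w"
      from key[OF x this] show "y \<le> rvar r h u w - x" by linarith
    qed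
    then show "x \<le> Sup (rvar_sums r h u w) - Sup (rvar_sums r h v w)" unfolding rvar_def by linarith
  qed
  then show ?thesis by linarith
qed

lemma rvar_partition_superadd:
  fixes x :: "nat \<Rightarrow> real"
  assumes fin: "finite_rvar r h a b" and r: "0 < r"
    and rng: "\<forall>i\<le>n. a \<le> x i \<and> x i \<le> b" and mono: "\<forall>i<n. x i \<le> x (Suc i)"
  shows "(\<Sum>i<n. rvar r h (x i) (x (Suc i))) \<le> rvar r h (x 0) (x n)"
  using rng mono
proof (induction n)
  case 0
  then show ?case using rvar_nonneg[OF finite_rvar_sub[OF fin]] by auto
next
  case (Suc n)
  have m: "x 0 \<le> x n" using chain_le[of "Suc n" x 0 n] Suc.prems by simp
  have "(\<Sum>i<Suc n. rvar r h (x i) (x (Suc i))) = (\<Sum>i<n. rvar r h (x i) (x (Suc i))) + rvar r h (x n) (x (Suc n))"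
    by simp
  also have "\<dots> \<le> rvar r h (x 0) (x n) + rvar r h (x n) (x (Suc n))"
    using Suc by auto
  also have "\<dots> \<le> rvar r h (x 0) (x (Suc n))"
    using Suc.prems m by (intro rvar_superadd finite_rvar_sub[OF fin] r) auto
  finally show ?case .
qed


lemma sum_remove:
  fixes phi psi :: "nat \<Rightarrow> real"
  assumes "k \<le> n" "\<forall>i<k. psi i = phi i" "\<forall>i. k < i \<longrightarrow> i \<le> n \<longrightarrow> psi i = phi (Suc i)"
  shows "(\<Sum>i<Suc (Suc n). phi i) = (\<Sum>i<Suc n. psi i) + (phi k + phi (Suc k) - psi k)"
  using assms
proof (induction n rule: dec_induct)
  case base
  have "(\<Sum>i<k. psi i) = (\<Sum>i<k. phi i)" using base by simp
  then show ?case by simp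
next
  case (step n)
  have "psi (Suc n) = phi (Suc (Suc n))" using step by simp
  then show ?case using step by simp
qed

lemma avg_exists:
  fixes phi :: "nat \<Rightarrow> real"
  assumes "finite K" "K \<noteq> {}" "(\<Sum>i\<in>K. phi i) \<le> S"
  shows "\<exists>j\<in>K. phi j \<le> S / card K"
proof (rule ccontr)
  assume "\<not> ?thesis"
  then have "\<And>j. j \<in> K \<Longrightarrow> S / card K < phi j" by force
  then have "(\<Sum>j\<in>K. S / card K) < (\<Sum>j\<in>K. phi j)" using assms by (intro sum_strict_mono) auto
  moreover have "(\<Sum>j\<in>K. S / card K) = S" using assms by simp
  ultimately show False using assms by linarith
qed

definition bnd :: "real \<Rightarrow> real \<Rightarrow> real \<Rightarrow> real \<Rightarrow> real \<Rightarrow> real \<Rightarrow> real \<Rightarrow> real" where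
  "bnd p q Vf Vg ef eg m = min (ef * (Vg / m) powr (1/q))
     (min (eg * (Vf / m) powr (1/p)) ((2 * Vf / m) powr (1/p) * (2 * Vg / m) powr (1/q)))"

lemma prod_bound:
  fixes a b :: "nat \<Rightarrow> real"
  assumes p: "0 < p" and q: "0 < q" and K: "K = {..<Suc n}"
    and an: "\<forall>i. 0 \<le> a i" and bn: "\<forall>i. 0 \<le> b i"
    and SA: "(\<Sum>i\<in>K. a i powr p) \<le> Vf" and SB: "(\<Sum>i\<in>K. b i powr q) \<le> Vg"
    and OA: "\<forall>i\<in>K. a i \<le> ef" and OB: "\<forall>i\<in>K. b i \<le> eg"
  shows "\<exists>k\<in>K. a k * b k \<le> bnd p q Vf Vg ef eg (real (Suc n))"
proof -
  have fin: "finite K" "K \<noteq> {}" and cK: "card K = Suc n" using K by auto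
  obtain k where k: "k \<in> K" "\<forall>j\<in>K. a k * b k \<le> a j * b j"
  proof -
    have "Min ((\<lambda>j. a j * b j) ` K) \<in> (\<lambda>j. a j * b j) ` K" using fin by (intro Min_in) auto
    then obtain k where "k \<in> K" "a k * b k = Min ((\<lambda>j. a j * b j) ` K)" by auto
    moreover have "\<forall>j\<in>K. Min ((\<lambda>j. a j * b j) ` K) \<le> a j * b j" using fin by auto
    ultimately show ?thesis using that by auto
  qed
  let ?m = "real (Suc n)"
  have ef0: "0 \<le> ef" using OA an k(1) by (meson order_trans)
  have eg0: "0 \<le> eg" using OB bn k(1) by (meson order_trans)
  have b1: "a k * b k \<le> ef * (Vg / ?m) powr (1/q)"
  proof -
    obtain j where j: "j \<in> K" "b j powr q \<le> Vg / ?m" using avg_exists[OF fin SB] cK by auto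
    have "b j \<le> (Vg / ?m) powr (1/q)" using j bn q by (intro powr_le_root) auto
    then have "a j * b j \<le> ef * (Vg / ?m) powr (1/q)" using OA j an bn ef0 by (intro mult_mono) auto
    then show ?thesis using k j by (meson order_trans)
  qed
  have b2: "a k * b k \<le> eg * (Vf / ?m) powr (1/p)"
  proof -
    obtain j where j: "j \<in> K" "a j powr p \<le> Vf / ?m" using avg_exists[OF fin SA] cK by auto
    have "a j \<le> (Vf / ?m) powr (1/p)" using j an p by (intro powr_le_root) auto
    then have "a j * b j \<le> (Vf / ?m) powr (1/p) * eg" using OB j an bn eg0 by (intro mult_mono) auto
    then show ?thesis using k j by (simp add: mult.commute) (meson order_trans)
  qed
  have b3: "a k * b k \<le> (2 * Vf / ?m) powr (1/p) * (2 * Vg / ?m) powr (1/q)"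
  proof (cases "Vf = 0 \<or> Vg = 0")
    case True
    then show ?thesis
    proof
      assume V: "Vf = 0"
      have "a k powr p \<le> Vf" using SA k(1) fin an by (meson member_le_sum powr_ge_zero order_trans)
      then have "a k = 0" using V an by (metis antisym powr_ge_zero powr_eq_0_iff)
      then show ?thesis by simp
    next
      assume V: "Vg = 0"
      have "b k powr q \<le> Vg" using SB k(1) fin bn by (meson member_le_sum powr_ge_zero order_trans)
      then have "b k = 0" using V bn by (metis antisym powr_ge_zero powr_eq_0_iff)
      then show ?thesis by simp
    qed
  next
    case False
    have Vf0: "0 \<le> Vf" using SA sum_nonneg[of K "\<lambda>i. a i powr p"] by (meson order_trans powr_ge_zero)
    have Vg0: "0 \<le> Vg" using SB sum_nonneg[of K "\<lambda>i. b i powr q"] by (meson order_trans powr_ge_zero)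
    then have Vp: "0 < Vf" "0 < Vg" using False Vf0 by auto
    have "(\<Sum>i\<in>K. a i powr p / Vf + b i powr q / Vg) = (\<Sum>i\<in>K. a i powr p) / Vf + (\<Sum>i\<in>K. b i powr q) / Vg"
      by (simp add: sum.distrib sum_divide_distrib)
    also have "\<dots> \<le> 1 + 1" using SA SB Vp by (intro add_mono) auto
    finally obtain j where j: "j \<in> K" "a j powr p / Vf + b j powr q / Vg \<le> 2 / ?m"
      using avg_exists[OF fin, of "\<lambda>i. a i powr p / Vf + b i powr q / Vg" 2] cK by auto
    have "a j powr p / Vf \<le> 2 / ?m" using j(2) Vp by (smt (verit) divide_nonneg_pos powr_ge_zero)
    then have ja: "a j powr p \<le> 2 * Vf / ?m" using Vp by (simp add: field_simps)
    have "b j powr q / Vg \<le> 2 / ?m" using j(2) Vp by (smt (verit) divide_nonneg_pos powr_ge_zero)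
    then have jb: "b j powr q \<le> 2 * Vg / ?m" using Vp by (simp add: field_simps)
    have "a j \<le> (2 * Vf / ?m) powr (1/p)" using ja an p by (intro powr_le_root) auto
    moreover have "b j \<le> (2 * Vg / ?m) powr (1/q)" using jb bn q by (intro powr_le_root) auto
    ultimately have "a j * b j \<le> (2 * Vf / ?m) powr (1/p) * (2 * Vg / ?m) powr (1/q)"
      using an bn by (intro mult_mono) auto
    then show ?thesis using k j by (meson order_trans)
  qed
  show ?thesis using k(1) b1 b2 b3 unfolding bnd_def by auto
qed


lemma tp_ranges:
  assumes tp: "tagged_partition u v x nu N"
  shows "\<forall>i\<le>N. u \<le> x i \<and> x i \<le> v" "\<forall>i<N. u \<le> nu i \<and> nu i \<le> v"
    "\<forall>i<N. x i < x (Suc i)"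
proof -
  have x0: "x 0 = u" and xN: "x N = v" and st: "\<forall>i<N. x i < x (Suc i)"
    and tg: "\<forall>i<N. x i \<le> nu i \<and> nu i \<le> x (Suc i)"
    using tp unfolding tagged_partition_def by auto
  have le: "\<forall>i<N. x i \<le> x (Suc i)" using st by (auto simp: less_imp_le)
  show xr: "\<forall>i\<le>N. u \<le> x i \<and> x i \<le> v"
    using chain_le[OF le] x0 xN by (metis le0 order_refl)
  show "\<forall>i<N. u \<le> nu i \<and> nu i \<le> v"
  proof (intro allI impI)
    fix i assume i: "i < N"
    then have "u \<le> x i" "x (Suc i) \<le> v" using xr by auto
    then show "u \<le> nu i \<and> nu i \<le> v" using tg i by (meson order_trans)
  qed
  show "\<forall>i<N. x i < x (Suc i)" by (rule st)
qed

lemma merge: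
  fixes f g :: "real \<Rightarrow> real" and x nu :: "nat \<Rightarrow> real"
  assumes p: "0 < p" and q: "0 < q"
    and BF: "\<forall>s\<in>rvar_sums p f u v. s \<le> Vf" and BG: "\<forall>s\<in>rvar_sums q g u v. s \<le> Vg"
    and OF: "\<forall>s\<in>{u..v}. \<forall>t\<in>{u..v}. \<bar>f t - f s\<bar> \<le> ef"
    and OG: "\<forall>s\<in>{u..v}. \<forall>t\<in>{u..v}. \<bar>g t - g s\<bar> \<le> eg"
    and tp: "tagged_partition u v x nu (Suc n)"
  shows "\<exists>c\<in>{u..v}. \<bar>RS_sum f g x nu (Suc n) - f c * (g v - g u)\<bar>
           \<le> (\<Sum>m\<in>{1..n}. bnd p q Vf Vg ef eg (real m))"
  using tp
proof (induction n arbitrary: x nu)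
  case 0
  then have "x 0 = u" "x (Suc 0) = v" "x 0 \<le> nu 0" "nu 0 \<le> x (Suc 0)"
    unfolding tagged_partition_def by auto
  then show ?case by (intro bexI[of _ "nu 0"]) (auto simp: RS_sum_def)
next
  case (Suc n)
  let ?N = "Suc (Suc n)"
  note tp = Suc.prems
  have x0: "x 0 = u" and xN: "x ?N = v" and tg: "\<forall>i<?N. x i \<le> nu i \<and> nu i \<le> x (Suc i)"
    using tp unfolding tagged_partition_def by auto
  note R = tp_ranges[OF tp]
  define a where "a i = \<bar>f (nu (Suc i)) - f (nu i)\<bar>" for i
  define b where "b i = \<bar>g (x (Suc (Suc i))) - g (x (Suc i))\<bar>" for i
  have SA: "(\<Sum>i\<in>{..<Suc n}. a i powr p) \<le> Vf"
  proof -
    have "(\<Sum>i<Suc n. \<bar>f (nu (Suc i)) - f (nu i)\<bar> powr p) \<in> rvar_sums p f u v"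
    proof (rule nondecr_in_rvar_sums[OF p])
      show "\<forall>i\<le>Suc n. u \<le> nu i \<and> nu i \<le> v" using R(2) by auto
      show "\<forall>i<Suc n. nu i \<le> nu (Suc i)" using tg by (meson Suc_mono less_SucI order_trans)
    qed
    then show ?thesis using BF by (simp add: a_def)
  qed
  have SB: "(\<Sum>i\<in>{..<Suc n}. b i powr q) \<le> Vg"
  proof -
    have "(\<Sum>i<Suc n. \<bar>g (x (Suc (Suc i))) - g (x (Suc i))\<bar> powr q) \<in> rvar_sums q g u v"
      unfolding rvar_sums_def
      by (rule CollectI, rule exI[of _ "\<lambda>i. x (Suc i)"], rule exI[of _ "Suc n"]) (use R in auto)
    then show ?thesis using BG by (simp add: b_def)
  qed
  have OA: "\<forall>i\<in>{..<Suc n}. a i \<le> ef" unfolding a_def using OF R(2) by auto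
  have OB: "\<forall>i\<in>{..<Suc n}. b i \<le> eg" unfolding b_def using OG R(1) by auto
  obtain k0 where k0: "k0 \<in> {..<Suc n}" "a k0 * b k0 \<le> bnd p q Vf Vg ef eg (real (Suc n))"
    using prod_bound[OF p q refl _ _ SA SB OA OB] by (auto simp: a_def b_def)
  define x' where "x' i = (if i \<le> k0 then x i else x (Suc i))" for i
  define nu' where "nu' i = (if i \<le> k0 then nu i else nu (Suc i))" for i
  have tp': "tagged_partition u v x' nu' (Suc n)"
    unfolding tagged_partition_def
  proof (intro conjI allI impI)
    show "x' 0 = u" using x0 by (simp add: x'_def)
    show "x' (Suc n) = v" using xN k0 by (simp add: x'_def)
    fix i assume i: "i < Suc n"
    consider "i < k0" | "i = k0" | "k0 < i" by linarith
    note cs = this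
    show "x' i < x' (Suc i)"
    proof (cases rule: cs)
      case 2
      have "x k0 < x (Suc k0)" "x (Suc k0) < x (Suc (Suc k0))" using R(3) i 2 by auto
      then show ?thesis using 2 by (simp add: x'_def)
    qed (use R(3) i in \<open>auto simp: x'_def\<close>)
    show "x' i \<le> nu' i"
      using cs tg i by cases (auto simp: x'_def nu'_def)
    show "nu' i \<le> x' (Suc i)"
    proof (cases rule: cs)
      case 2
      have "nu k0 \<le> x (Suc k0)" "x (Suc k0) < x (Suc (Suc k0))" using tg R(3) i 2 by auto
      then show ?thesis using 2 by (simp add: x'_def nu'_def)
    qed (use tg i in \<open>auto simp: x'_def nu'_def\<close>)
  qed
  define phi where "phi i = f (nu i) * (g (x (Suc i)) - g (x i))" for i
  define psi where "psi i = f (nu' i) * (g (x' (Suc i)) - g (x' i))" for i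
  have eqs: "(\<Sum>i<Suc (Suc n). phi i) = (\<Sum>i<Suc n. psi i) + (phi k0 + phi (Suc k0) - psi k0)"
    by (rule sum_remove) (use k0 in \<open>auto simp: phi_def psi_def x'_def nu'_def\<close>)
  have ex: "phi k0 + phi (Suc k0) - psi k0 = (f (nu (Suc k0)) - f (nu k0)) * (g (x (Suc (Suc k0))) - g (x (Suc k0)))"
    by (simp add: phi_def psi_def x'_def nu'_def algebra_simps)
  have exa: "\<bar>phi k0 + phi (Suc k0) - psi k0\<bar> = a k0 * b k0"
    unfolding ex a_def b_def by (simp add: abs_mult)
  obtain c where c: "c \<in> {u..v}" "\<bar>RS_sum f g x' nu' (Suc n) - f c * (g v - g u)\<bar>
           \<le> (\<Sum>m\<in>{1..n}. bnd p q Vf Vg ef eg (real m))"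
    using Suc.IH[OF tp'] by blast
  have "RS_sum f g x nu ?N = RS_sum f g x' nu' (Suc n) + (phi k0 + phi (Suc k0) - psi k0)"
    using eqs unfolding RS_sum_def phi_def psi_def by simp
  then have "\<bar>RS_sum f g x nu ?N - f c * (g v - g u)\<bar>
      \<le> \<bar>RS_sum f g x' nu' (Suc n) - f c * (g v - g u)\<bar> + a k0 * b k0"
    using exa by linarith
  also have "\<dots> \<le> (\<Sum>m\<in>{1..n}. bnd p q Vf Vg ef eg (real m)) + bnd p q Vf Vg ef eg (real (Suc n))"
    using c k0 by linarith
  also have "\<dots> = (\<Sum>m\<in>{1..Suc n}. bnd p q Vf Vg ef eg (real m))" by simp
  finally show ?case using c(1) by blast
qed


lemma powr_div_m:
  fixes X m e :: real
  assumes "0 \<le> X" "0 < m"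
  shows "(X / m) powr e = X powr e * m powr (-e)"
proof -
  have "(X / m) powr e = X powr e / m powr e" using assms by (intro powr_divide)
  also have "\<dots> = X powr e * m powr (-e)" by (simp add: powr_minus divide_inverse)
  finally show ?thesis .
qed

lemma powr_2div_m:
  fixes X m e :: real
  assumes "0 \<le> X" "0 < m"
  shows "(2 * X / m) powr e = 2 powr e * X powr e * m powr (-e)"
proof -
  have "(2 * X / m) powr e = (2 * X) powr e * m powr (-e)" using assms by (intro powr_div_m) auto
  also have "(2 * X) powr e = 2 powr e * X powr e" using assms by (simp add: powr_mult)
  finally show ?thesis .
qed

lemma min_mult_left:
  fixes B y z :: real
  assumes "0 \<le> B"
  shows "min (B * y) (B * z) = B * min y z"
proof (cases "B = 0")
  case False
  then have "0 < B" using assms by simp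
  then show ?thesis by (auto simp: min_def mult_le_cancel_left_pos)
qed simp

lemma bnd_le_f:
  fixes m :: real
  assumes "0 < p" "0 < q" "0 \<le> Vf" "0 \<le> Vg" "0 < m"
  shows "bnd p q Vf Vg ef eg m \<le> Vg powr (1/q) * min (ef * m powr (-(1/q))) (2 powr (1/p+1/q) * Vf powr (1/p) * m powr (-(1/p+1/q)))"
proof -
  have e1: "ef * (Vg / m) powr (1/q) = Vg powr (1/q) * (ef * m powr (-(1/q)))"
    using assms by (simp add: powr_div_m)
  have e3: "(2 * Vf / m) powr (1/p) * (2 * Vg / m) powr (1/q)
      = Vg powr (1/q) * (2 powr (1/p+1/q) * Vf powr (1/p) * m powr (-(1/p+1/q)))"
  proof -
    have a: "m powr (-(1/p+1/q)) = m powr (-(1/p)) * m powr (-(1/q))" by (subst powr_add[symmetric]) simp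
    have b: "(2::real) powr (1/p+1/q) = 2 powr (1/p) * 2 powr (1/q)" by (simp add: powr_add)
    show ?thesis unfolding powr_2div_m[OF assms(3,5)] powr_2div_m[OF assms(4,5)] a b by (simp add: mult_ac)
  qed
  have "bnd p q Vf Vg ef eg m \<le> min (ef * (Vg / m) powr (1/q)) ((2 * Vf / m) powr (1/p) * (2 * Vg / m) powr (1/q))"
    unfolding bnd_def by linarith
  also have "\<dots> = Vg powr (1/q) * min (ef * m powr (-(1/q))) (2 powr (1/p+1/q) * Vf powr (1/p) * m powr (-(1/p+1/q)))"
    unfolding e1 e3 by (rule min_mult_left) simp
  finally show ?thesis .
qed

lemma bnd_le_g:
  fixes m :: real
  assumes "0 < p" "0 < q" "0 \<le> Vf" "0 \<le> Vg" "0 < m"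
  shows "bnd p q Vf Vg ef eg m \<le> Vf powr (1/p) * min (eg * m powr (-(1/p))) (2 powr (1/q+1/p) * Vg powr (1/q) * m powr (-(1/q+1/p)))"
proof -
  have e1: "eg * (Vf / m) powr (1/p) = Vf powr (1/p) * (eg * m powr (-(1/p)))"
    using assms by (simp add: powr_div_m)
  have e3: "(2 * Vf / m) powr (1/p) * (2 * Vg / m) powr (1/q)
      = Vf powr (1/p) * (2 powr (1/q+1/p) * Vg powr (1/q) * m powr (-(1/q+1/p)))"
  proof -
    have a0: "-(1/q+1/p) = -(1/p) + -(1/q)" by simp
    have a: "m powr (-(1/q+1/p)) = m powr (-(1/p)) * m powr (-(1/q))" by (simp only: a0 powr_add)
    have b: "(2::real) powr (1/q+1/p) = 2 powr (1/p) * 2 powr (1/q)" by (simp add: powr_add)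
    show ?thesis unfolding powr_2div_m[OF assms(3,5)] powr_2div_m[OF assms(4,5)] a b by (simp add: mult_ac)
  qed
  have "bnd p q Vf Vg ef eg m \<le> min (eg * (Vf / m) powr (1/p)) ((2 * Vf / m) powr (1/p) * (2 * Vg / m) powr (1/q))"
    unfolding bnd_def by linarith
  also have "\<dots> = Vf powr (1/p) * min (eg * m powr (-(1/p))) (2 powr (1/q+1/p) * Vg powr (1/q) * m powr (-(1/q+1/p)))"
    unfolding e1 e3 by (rule min_mult_left) simp
  finally show ?thesis .
qed


definition GK :: "real \<Rightarrow> real \<Rightarrow> real \<Rightarrow> real" where
  "GK s th c = 1/(1-s) + c * 2 powr (th-1) * th/(th-1)"

lemma BF_single:
  fixes h :: "real \<Rightarrow> real"
  assumes r: "0 < r" and BF: "\<forall>z\<in>rvar_sums r h u v. z \<le> V" and uv: "u \<le> v"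
    and st: "s \<in> {u..v}" "t \<in> {u..v}"
  shows "\<bar>h t - h s\<bar> \<le> V powr (1/r)"
proof -
  have V0: "0 \<le> V" using BF rvar_sums_zero[OF uv] by blast
  have key: "\<bar>h b - h a\<bar> \<le> V powr (1/r)" if "a \<in> {u..v}" "b \<in> {u..v}" "a \<le> b" for a b
  proof (cases "a = b")
    case True then show ?thesis by simp
  next
    case False
    then have "\<bar>h b - h a\<bar> powr r \<in> rvar_sums r h u v" using that by (intro rvar_sums_single) auto
    then show ?thesis using BF r by (intro powr_le_root) auto
  qed
  show ?thesis
  proof (cases "s \<le> t")
    case True then show ?thesis using key st by auto
  next
    case False then show ?thesis using key[of t s] st by (auto simp: abs_minus_commute)
  qed
qed

lemma local_f:
  fixes f g :: "real \<Rightarrow> real" and x nu :: "nat \<Rightarrow> real"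
  assumes p: "1 < p" and q: "1 < q" and th: "1 < 1/p + 1/q"
    and BF: "\<forall>s\<in>rvar_sums p f u v. s \<le> Vf" and BG: "\<forall>s\<in>rvar_sums q g u v. s \<le> Vg"
    and OF: "\<forall>s\<in>{u..v}. \<forall>t\<in>{u..v}. \<bar>f t - f s\<bar> \<le> ef"
    and OG: "\<forall>s\<in>{u..v}. \<forall>t\<in>{u..v}. \<bar>g t - g s\<bar> \<le> eg"
    and tp: "tagged_partition u v x nu n" and n: "0 < n" and c0: "c0 \<in> {u..v}"
  shows "\<bar>RS_sum f g x nu n - f c0 * (g v - g u)\<bar>
     \<le> (GK (1/q) (1/p+1/q) (2 powr (1/p+1/q)) + 1) * ef powr (1 + p/q - p) * Vf powr (1 - 1/q) * Vg powr (1/q)"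
proof -
  obtain n' where n': "n = Suc n'" using n by (cases n) auto
  have uv: "u \<le> v" using tp_ranges(1)[OF tp] tp unfolding tagged_partition_def by (metis le0 order_refl)
  have Vf0: "0 \<le> Vf" using BF rvar_sums_zero[OF uv] by blast
  have Vg0: "0 \<le> Vg" using BG rvar_sums_zero[OF uv] by blast
  have ef0: "0 \<le> ef" using OF uv by fastforce
  define al where "al = (1 - 1/q) / ((1/p + 1/q) - 1/q)"
  have al_eq: "al = p - p/q" unfolding al_def using p by (simp add: field_simps)
  have al01: "0 \<le> al" "al \<le> 1"
  proof -
    have "p / q \<le> p / 1" using p q by (intro divide_left_mono) auto
    then show "0 \<le> al" using al_eq by simp
    have "p - p/q \<le> 1" using th p q by (simp add: field_simps)
    then show "al \<le> 1" using al_eq by simp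
  qed
  let ?A = "Vf powr (1/p)"
  let ?K = "GK (1/q) (1/p+1/q) (2 powr (1/p+1/q))"
  obtain c where c: "c \<in> {u..v}" "\<bar>RS_sum f g x nu n - f c * (g v - g u)\<bar>
           \<le> (\<Sum>m\<in>{1..n'}. bnd p q Vf Vg ef eg (real m))"
    using merge[of p q f u v Vf g Vg ef eg x nu n'] p q BF BG OF OG tp n' by auto
  have "(\<Sum>m\<in>{1..n'}. bnd p q Vf Vg ef eg (real m))
      \<le> (\<Sum>m\<in>{1..n'}. Vg powr (1/q) * min (ef * real m powr (-(1/q))) (2 powr (1/p+1/q) * ?A * real m powr (-(1/p+1/q))))"
    by (rule sum_mono, rule bnd_le_f) (use p q Vf0 Vg0 in auto)
  also have "\<dots> = Vg powr (1/q) * (\<Sum>m\<in>{1..n'}. min (ef * real m powr (-(1/q))) (2 powr (1/p+1/q) * ?A * real m powr (-(1/p+1/q))))"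
    by (simp add: sum_distrib_left)
  also have "\<dots> \<le> Vg powr (1/q) * (?K * ef powr (1 - al) * ?A powr al)"
    unfolding GK_def al_def
    by (intro mult_left_mono genG) (use p q th ef0 in auto)
  finally have s1: "\<bar>RS_sum f g x nu n - f c * (g v - g u)\<bar> \<le> Vg powr (1/q) * (?K * ef powr (1 - al) * ?A powr al)"
    using c(2) by linarith
  have fd: "\<bar>f c - f c0\<bar> \<le> min ef ?A"
    using OF c c0 BF_single[of p f u v Vf c0 c] BF uv p by auto
  also have "\<dots> \<le> ef powr (1 - al) * ?A powr (1 - (1 - al))"
    using ef0 al01 by (intro min_le_powr) auto
  finally have fd': "\<bar>f c - f c0\<bar> \<le> ef powr (1 - al) * ?A powr al" by simp
  have gd: "\<bar>g v - g u\<bar> \<le> Vg powr (1/q)"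
    using BF_single[of q g u v Vg u v] BG uv q by auto
  have "\<bar>f c - f c0\<bar> * \<bar>g v - g u\<bar> \<le> (ef powr (1 - al) * ?A powr al) * Vg powr (1/q)"
    using fd' gd by (intro mult_mono) auto
  then have s2: "\<bar>(f c - f c0) * (g v - g u)\<bar> \<le> Vg powr (1/q) * (ef powr (1 - al) * ?A powr al)"
    by (simp add: abs_mult mult_ac)
  have "\<bar>RS_sum f g x nu n - f c0 * (g v - g u)\<bar>
      \<le> \<bar>RS_sum f g x nu n - f c * (g v - g u)\<bar> + \<bar>(f c - f c0) * (g v - g u)\<bar>"
  proof -
    have "RS_sum f g x nu n - f c0 * (g v - g u) = (RS_sum f g x nu n - f c * (g v - g u)) + (f c - f c0) * (g v - g u)"
      by (simp add: algebra_simps)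
    then show ?thesis by (metis abs_triangle_ineq)
  qed
  also have "\<dots> \<le> Vg powr (1/q) * (?K * ef powr (1 - al) * ?A powr al) + Vg powr (1/q) * (ef powr (1 - al) * ?A powr al)"
    using s1 s2 by linarith
  also have "\<dots> = (?K + 1) * ef powr (1 - al) * ?A powr al * Vg powr (1/q)"
    by (simp add: algebra_simps)
  also have "ef powr (1 - al) = ef powr (1 + p/q - p)"
  proof -
    have e: "1 - al = 1 + p/q - p" using al_eq by simp
    show ?thesis by (simp only: e)
  qed
  also have "?A powr al = Vf powr (1 - 1/q)"
  proof -
    have e: "1/p * al = 1 - 1/q" using al_eq p by (simp add: field_simps)
    show ?thesis by (simp only: powr_powr e)
  qed
  finally show ?thesis .
qed


lemma local_g:
  fixes f g :: "real \<Rightarrow> real" and x nu :: "nat \<Rightarrow> real"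
  assumes p: "1 < p" and q: "1 < q" and th: "1 < 1/p + 1/q"
    and BF: "\<forall>s\<in>rvar_sums p f u v. s \<le> Vf" and BG: "\<forall>s\<in>rvar_sums q g u v. s \<le> Vg"
    and OF: "\<forall>s\<in>{u..v}. \<forall>t\<in>{u..v}. \<bar>f t - f s\<bar> \<le> ef"
    and OG: "\<forall>s\<in>{u..v}. \<forall>t\<in>{u..v}. \<bar>g t - g s\<bar> \<le> eg"
    and tp: "tagged_partition u v x nu n" and n: "0 < n" and c0: "c0 \<in> {u..v}"
  shows "\<bar>RS_sum f g x nu n - f c0 * (g v - g u)\<bar>
     \<le> (GK (1/p) (1/q+1/p) (2 powr (1/q+1/p)) + 1) * eg powr (1 + q/p - q) * Vg powr (1 - 1/p) * Vf powr (1/p)"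
proof -
  obtain n' where n': "n = Suc n'" using n by (cases n) auto
  have uv: "u \<le> v" using tp_ranges(1)[OF tp] tp unfolding tagged_partition_def by (metis le0 order_refl)
  have Vf0: "0 \<le> Vf" using BF rvar_sums_zero[OF uv] by blast
  have Vg0: "0 \<le> Vg" using BG rvar_sums_zero[OF uv] by blast
  have eg0: "0 \<le> eg" using OG uv by fastforce
  define al where "al = (1 - 1/p) / ((1/q + 1/p) - 1/p)"
  have al_eq: "al = q - q/p" unfolding al_def using q by (simp add: field_simps)
  have al01: "0 \<le> al" "al \<le> 1"
  proof -
    have "q / p \<le> q / 1" using p q by (intro divide_left_mono) auto
    then show "0 \<le> al" using al_eq by simp
    have "q - q/p \<le> 1" using th p q by (simp add: field_simps)
    then show "al \<le> 1" using al_eq by simp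
  qed
  let ?A = "Vg powr (1/q)"
  let ?K = "GK (1/p) (1/q+1/p) (2 powr (1/q+1/p))"
  obtain c where c: "c \<in> {u..v}" "\<bar>RS_sum f g x nu n - f c * (g v - g u)\<bar>
           \<le> (\<Sum>m\<in>{1..n'}. bnd p q Vf Vg ef eg (real m))"
    using merge[of p q f u v Vf g Vg ef eg x nu n'] p q BF BG OF OG tp n' by auto
  have th': "1 < 1/q + 1/p" using th by simp
  have "(\<Sum>m\<in>{1..n'}. bnd p q Vf Vg ef eg (real m))
      \<le> (\<Sum>m\<in>{1..n'}. Vf powr (1/p) * min (eg * real m powr (-(1/p))) (2 powr (1/q+1/p) * ?A * real m powr (-(1/q+1/p))))"
    by (rule sum_mono, rule bnd_le_g) (use p q Vf0 Vg0 in auto)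
  also have "\<dots> = Vf powr (1/p) * (\<Sum>m\<in>{1..n'}. min (eg * real m powr (-(1/p))) (2 powr (1/q+1/p) * ?A * real m powr (-(1/q+1/p))))"
    by (simp add: sum_distrib_left)
  also have "\<dots> \<le> Vf powr (1/p) * (?K * eg powr (1 - al) * ?A powr al)"
    unfolding GK_def al_def
    by (intro mult_left_mono genG) (use p q th' eg0 in auto)
  finally have s1: "\<bar>RS_sum f g x nu n - f c * (g v - g u)\<bar> \<le> Vf powr (1/p) * (?K * eg powr (1 - al) * ?A powr al)"
    using c(2) by linarith
  have fd: "\<bar>f c - f c0\<bar> \<le> Vf powr (1/p)"
    using c c0 BF_single[of p f u v Vf c0 c] BF uv p by auto
  have gd0: "\<bar>g v - g u\<bar> \<le> min eg ?A"
    using OG uv BF_single[of q g u v Vg u v] BG q by auto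
  also have "\<dots> \<le> eg powr (1 - al) * ?A powr (1 - (1 - al))"
    using eg0 al01 by (intro min_le_powr) auto
  finally have gd: "\<bar>g v - g u\<bar> \<le> eg powr (1 - al) * ?A powr al" by simp
  have "\<bar>f c - f c0\<bar> * \<bar>g v - g u\<bar> \<le> Vf powr (1/p) * (eg powr (1 - al) * ?A powr al)"
    using fd gd by (intro mult_mono) auto
  then have s2: "\<bar>(f c - f c0) * (g v - g u)\<bar> \<le> Vf powr (1/p) * (eg powr (1 - al) * ?A powr al)"
    by (simp add: abs_mult mult_ac)
  have "\<bar>RS_sum f g x nu n - f c0 * (g v - g u)\<bar>
      \<le> \<bar>RS_sum f g x nu n - f c * (g v - g u)\<bar> + \<bar>(f c - f c0) * (g v - g u)\<bar>"
  proof -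
    have "RS_sum f g x nu n - f c0 * (g v - g u) = (RS_sum f g x nu n - f c * (g v - g u)) + (f c - f c0) * (g v - g u)"
      by (simp add: algebra_simps)
    then show ?thesis by (metis abs_triangle_ineq)
  qed
  also have "\<dots> \<le> Vf powr (1/p) * (?K * eg powr (1 - al) * ?A powr al) + Vf powr (1/p) * (eg powr (1 - al) * ?A powr al)"
    using s1 s2 by linarith
  also have "\<dots> = (?K + 1) * eg powr (1 - al) * ?A powr al * Vf powr (1/p)"
    by (simp add: algebra_simps)
  also have "eg powr (1 - al) = eg powr (1 + q/p - q)"
  proof -
    have e: "1 - al = 1 + q/p - q" using al_eq by simp
    show ?thesis by (simp only: e)
  qed
  also have "?A powr al = Vg powr (1 - 1/p)"
  proof -
    have e: "1/q * al = 1 - 1/p" using al_eq q by (simp add: field_simps)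
    show ?thesis by (simp only: powr_powr e)
  qed
  finally show ?thesis .
qed


lemma split_sum:
  fixes sg :: "nat \<Rightarrow> nat" and psi :: "nat \<Rightarrow> real"
  shows "(\<forall>i<n. sg i \<le> sg (Suc i)) \<Longrightarrow> sg 0 \<le> sg n \<and>
     (\<Sum>j\<in>{sg 0..<sg n}. psi j) = (\<Sum>i<n. \<Sum>j\<in>{sg i..<sg (Suc i)}. psi j)"
proof (induction n)
  case 0 then show ?case by simp
next
  case (Suc n)
  then have ih: "sg 0 \<le> sg n" "(\<Sum>j\<in>{sg 0..<sg n}. psi j) = (\<Sum>i<n. \<Sum>j\<in>{sg i..<sg (Suc i)}. psi j)"
    by auto
  have le: "sg n \<le> sg (Suc n)" using Suc.prems by auto
  have "(\<Sum>j\<in>{sg 0..<sg (Suc n)}. psi j) = (\<Sum>j\<in>{sg 0..<sg n}. psi j) + (\<Sum>j\<in>{sg n..<sg (Suc n)}. psi j)"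
    using ih(1) le by (simp add: sum.atLeastLessThan_concat)
  then show ?case using ih le by simp
qed

lemma coarsen:
  fixes f g :: "real \<Rightarrow> real" and x nu y mu :: "nat \<Rightarrow> real" and be :: "nat \<Rightarrow> real"
  assumes tpP: "tagged_partition a b x nu n" and tpQ: "tagged_partition a b y mu N"
    and sub: "\<forall>i\<le>n. \<exists>j\<le>N. y j = x i"
    and loc: "\<forall>i<n. \<forall>z mz L. tagged_partition (x i) (x (Suc i)) z mz L \<and> 0 < L \<longrightarrow>
        \<bar>RS_sum f g z mz L - f (nu i) * (g (x (Suc i)) - g (x i))\<bar> \<le> be i"
  shows "\<bar>RS_sum f g y mu N - RS_sum f g x nu n\<bar> \<le> (\<Sum>i<n. be i)"
proof -
  have y0: "y 0 = a" and yN: "y N = b" and yst: "\<forall>j<N. y j < y (Suc j)"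
    and ytg: "\<forall>j<N. y j \<le> mu j \<and> mu j \<le> y (Suc j)"
    using tpQ unfolding tagged_partition_def by auto
  have x0: "x 0 = a" and xn: "x n = b" and xst: "\<forall>i<n. x i < x (Suc i)"
    using tpP unfolding tagged_partition_def by auto
  have yle: "\<forall>j<N. y j \<le> y (Suc j)" using yst by (auto simp: less_imp_le)
  have uniq: "j = j'" if h: "j \<le> N" "j' \<le> N" "y j = y j'" for j j'
  proof (rule ccontr)
    assume "j \<noteq> j'"
    then have "j < j' \<or> j' < j" by linarith
    then show False
    proof
      assume jj: "j < j'"
      have "y j < y j'" by (rule chain_less[OF yst jj h(2)])
      then show False using h(3) by simp
    next
      assume jj: "j' < j"
      have "y j' < y j" by (rule chain_less[OF yst jj h(1)])
      then show False using h(3) by simp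
    qed
  qed
  define sg where "sg i = (THE j. j \<le> N \<and> y j = x i)" for i
  have sgp: "sg i \<le> N \<and> y (sg i) = x i" if hi: "i \<le> n" for i
  proof -
    have "\<exists>j\<le>N. y j = x i" using sub hi by simp
    then obtain j where j: "j \<le> N" "y j = x i" by blast
    have "\<exists>!j. j \<le> N \<and> y j = x i"
    proof (rule ex1I[of _ j])
      show "j \<le> N \<and> y j = x i" using j by simp
      fix j' assume "j' \<le> N \<and> y j' = x i"
      then show "j' = j" using uniq[of j' j] j by simp
    qed
    from theI'[OF this] show ?thesis unfolding sg_def .
  qed
  have sg0: "sg 0 = 0"
  proof -
    have "sg 0 \<le> N" "y (sg 0) = x 0" using sgp[of 0] by auto
    then show ?thesis using uniq[of "sg 0" 0] y0 x0 by simp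
  qed
  have sgn: "sg n = N"
  proof -
    have "sg n \<le> N" "y (sg n) = x n" using sgp[of n] by auto
    then show ?thesis using uniq[of "sg n" N] yN xn by simp
  qed
  have sgst: "sg i < sg (Suc i)" if "i < n" for i
  proof (rule ccontr)
    assume "\<not> sg i < sg (Suc i)"
    then have "sg (Suc i) \<le> sg i" by simp
    moreover have "sg i \<le> N" using sgp[of i] that by simp
    ultimately have "y (sg (Suc i)) \<le> y (sg i)" by (rule chain_le[OF yle])
    then have "x (Suc i) \<le> x i" using sgp[of i] sgp[of "Suc i"] that by auto
    moreover have "x i < x (Suc i)" using xst that by blast
    ultimately show False by linarith
  qed
  define psi where "psi j = f (mu j) * (g (y (Suc j)) - g (y j))" for j
  have "RS_sum f g y mu N = (\<Sum>j\<in>{sg 0..<sg n}. psi j)"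
    unfolding RS_sum_def psi_def sg0 sgn by (simp add: atLeast0LessThan)
  also have "\<dots> = (\<Sum>i<n. \<Sum>j\<in>{sg i..<sg (Suc i)}. psi j)"
    using split_sum[of n sg psi] sgst by (auto simp: less_imp_le)
  finally have SQ: "RS_sum f g y mu N = (\<Sum>i<n. \<Sum>j\<in>{sg i..<sg (Suc i)}. psi j)" .
  have cell: "\<bar>(\<Sum>j\<in>{sg i..<sg (Suc i)}. psi j) - f (nu i) * (g (x (Suc i)) - g (x i))\<bar> \<le> be i"
    if i: "i < n" for i
  proof -
    define L where "L = sg (Suc i) - sg i"
    define z where "z k = y (sg i + k)" for k
    define mz where "mz k = mu (sg i + k)" for k
    have L: "0 < L" "sg (Suc i) = L + sg i" using sgst[OF i] by (auto simp: L_def)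
    have sgN: "sg (Suc i) \<le> N" using sgp[of "Suc i"] i by auto
    have "(\<Sum>j\<in>{sg i..<sg (Suc i)}. psi j) = (\<Sum>j\<in>{0 + sg i..<L + sg i}. psi j)" using L by simp
    also have "\<dots> = (\<Sum>k\<in>{0..<L}. psi (sg i + k))"
      by (subst sum.atLeastLessThan_shift_bounds) (simp add: comp_def add.commute)
    also have "\<dots> = RS_sum f g z mz L"
      unfolding RS_sum_def psi_def z_def mz_def by (simp add: atLeast0LessThan)
    finally have eq: "(\<Sum>j\<in>{sg i..<sg (Suc i)}. psi j) = RS_sum f g z mz L" .
    have tpz: "tagged_partition (x i) (x (Suc i)) z mz L"
      unfolding tagged_partition_def
    proof (intro conjI allI impI)
      show "z 0 = x i" using sgp[of i] i by (simp add: z_def)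
      show "z L = x (Suc i)" using sgp[of "Suc i"] i L by (simp add: z_def add.commute)
      fix k assume k: "k < L"
      then have "sg i + k < N" using L sgN by linarith
      then have "y (sg i + k) < y (Suc (sg i + k))" "y (sg i + k) \<le> mu (sg i + k) \<and> mu (sg i + k) \<le> y (Suc (sg i + k))"
        using yst ytg by blast+
      then show "z k < z (Suc k)" "z k \<le> mz k" "mz k \<le> z (Suc k)"
        by (simp_all add: z_def mz_def)
    qed
    have "\<bar>RS_sum f g z mz L - f (nu i) * (g (x (Suc i)) - g (x i))\<bar> \<le> be i"
      using loc i tpz L(1) by blast
    then show ?thesis unfolding eq .
  qed
  have "RS_sum f g y mu N - RS_sum f g x nu n
      = (\<Sum>i<n. (\<Sum>j\<in>{sg i..<sg (Suc i)}. psi j) - f (nu i) * (g (x (Suc i)) - g (x i)))"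
    unfolding SQ by (simp add: RS_sum_def sum_subtractf)
  then have "\<bar>RS_sum f g y mu N - RS_sum f g x nu n\<bar>
      \<le> (\<Sum>i<n. \<bar>(\<Sum>j\<in>{sg i..<sg (Suc i)}. psi j) - f (nu i) * (g (x (Suc i)) - g (x i))\<bar>)"
    by (simp add: sum_abs)
  also have "\<dots> \<le> (\<Sum>i<n. be i)" by (rule sum_mono) (use cell in auto)
  finally show ?thesis .
qed


lemma uniform_partition:
  fixes a b :: real
  assumes ab: "a < b" and k: "0 < k"
  defines "ux \<equiv> (\<lambda>i. a + real i * (b - a) / real k)"
  shows "tagged_partition a b ux ux k" "\<forall>i<k. ux (Suc i) - ux i = (b - a) / real k"
proof -
  have d: "ux (Suc i) - ux i = (b - a) / real k" for i
    using k unfolding ux_def by (simp add: field_simps)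
  have pos: "0 < (b - a) / real k" using ab k by simp
  show "tagged_partition a b ux ux k"
    unfolding tagged_partition_def
  proof (intro conjI allI impI)
    show "ux 0 = a" by (simp add: ux_def)
    show "ux k = b" using k by (simp add: ux_def)
    fix i assume "i < k"
    show "ux i < ux (Suc i)" using d[of i] pos by linarith
    show "ux i \<le> ux (Suc i)" using d[of i] pos by linarith
  qed auto
  show "\<forall>i<k. ux (Suc i) - ux i = (b - a) / real k" using d by simp
qed

lemma common_refinement:
  assumes tp1: "tagged_partition a b x nu n" and tp2: "tagged_partition a b x' nu' n'"
  shows "\<exists>y N. tagged_partition a b y y N \<and> (\<forall>i\<le>n. \<exists>j\<le>N. y j = x i) \<and> (\<forall>i\<le>n'. \<exists>j\<le>N. y j = x' i)"
proof -
  define X where "X = x ` {..n} \<union> x' ` {..n'}"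
  have finX: "finite X" unfolding X_def by simp
  define ys where "ys = sorted_list_of_set X"
  have setys: "set ys = X" unfolding ys_def using finX by simp
  have srt: "sorted_wrt (<) ys" unfolding ys_def by (rule strict_sorted_list_of_set)
  have Xr: "\<forall>z\<in>X. a \<le> z \<and> z \<le> b"
    using tp_ranges(1)[OF tp1] tp_ranges(1)[OF tp2] unfolding X_def by auto
  have aX: "a \<in> X" using tp1 unfolding X_def tagged_partition_def by force
  have bX: "b \<in> X" using tp1 unfolding X_def tagged_partition_def by force
  have inX: "\<exists>j<length ys. ys ! j = z" if "z \<in> X" for z
    using that setys by (metis in_set_conv_nth)
  have len: "0 < length ys" using aX setys by (cases ys) auto
  define N where "N = length ys - 1"
  define y where "y j = ys ! j" for j
  have yX: "y j \<in> X" if "j \<le> N" for j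
    using that len setys unfolding y_def N_def by (metis Suc_pred' le_imp_less_Suc nth_mem)
  have ylt: "y i < y j" if "i < j" "j \<le> N" for i j
    using sorted_wrt_nth_less[OF srt that(1)] that len unfolding y_def N_def by simp
  have yle: "y i \<le> y j" if "i \<le> j" "j \<le> N" for i j
    using ylt[of i j] that by (cases "i = j") auto
  have y0: "y 0 = a"
  proof -
    obtain j where j: "j < length ys" "ys ! j = a" using inX[OF aX] by blast
    have "y 0 \<le> y j" using j yle[of 0 j] unfolding N_def by simp
    moreover have "a \<le> y 0" using yX[of 0] Xr by auto
    ultimately show ?thesis using j by (simp add: y_def)
  qed
  have yN: "y N = b"
  proof -
    obtain j where j: "j < length ys" "ys ! j = b" using inX[OF bX] by blast
    have "y j \<le> y N" using j yle[of j N] unfolding N_def by simp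
    moreover have "y N \<le> b" using yX[of N] Xr by auto
    ultimately show ?thesis using j by (simp add: y_def)
  qed
  have yst: "\<forall>i<N. y i < y (Suc i)" using ylt by auto
  have tp: "tagged_partition a b y y N"
    unfolding tagged_partition_def using y0 yN yst by (auto simp: less_imp_le)
  have s1: "\<forall>i\<le>n. \<exists>j\<le>N. y j = x i"
  proof (intro allI impI)
    fix i assume "i \<le> n"
    then have "x i \<in> X" unfolding X_def by auto
    then obtain j where "j < length ys" "ys ! j = x i" using inX by blast
    then show "\<exists>j\<le>N. y j = x i" unfolding y_def N_def by (intro exI[of _ j]) auto
  qed
  have s2: "\<forall>i\<le>n'. \<exists>j\<le>N. y j = x' i"
  proof (intro allI impI)
    fix i assume "i \<le> n'"
    then have "x' i \<in> X" unfolding X_def by auto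
    then obtain j where "j < length ys" "ys ! j = x' i" using inX by blast
    then show "\<exists>j\<le>N. y j = x' i" unfolding y_def N_def by (intro exI[of _ j]) auto
  qed
  show ?thesis using tp s1 s2 by blast
qed

lemma lebesgue_cells:
  fixes f g :: "real \<Rightarrow> real"
  assumes cont: "\<forall>t\<in>{a..b}. continuous (at t within {a..b}) f \<or> continuous (at t within {a..b}) g"
    and eta: "0 < eta"
  shows "\<exists>d>0. \<forall>s t. a \<le> s \<and> s \<le> t \<and> t \<le> b \<and> t - s < d \<longrightarrow>
     (\<forall>u\<in>{s..t}. \<forall>v\<in>{s..t}. \<bar>f v - f u\<bar> \<le> eta) \<or> (\<forall>u\<in>{s..t}. \<forall>v\<in>{s..t}. \<bar>g v - g u\<bar> \<le> eta)"
proof -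
  define Pf where "Pf c r \<longleftrightarrow> (\<forall>z\<in>{a..b}. dist z c < r \<longrightarrow> dist (f z) (f c) < eta/2)" for c r
  define Pg where "Pg c r \<longleftrightarrow> (\<forall>z\<in>{a..b}. dist z c < r \<longrightarrow> dist (g z) (g c) < eta/2)" for c r
  define Gs where "Gs = {ball c r | c r. c \<in> {a..b} \<and> 0 < r \<and> (Pf c r \<or> Pg c r)}"
  have cover: "{a..b} \<subseteq> \<Union>Gs"
  proof
    fix c assume c: "c \<in> {a..b}"
    have "eta/2 > 0" using eta by simp
    from cont c have "continuous (at c within {a..b}) f \<or> continuous (at c within {a..b}) g" by blast
    then obtain r where r: "0 < r" "Pf c r \<or> Pg c r"
    proof
      assume "continuous (at c within {a..b}) f"
      then obtain r where "0 < r" "Pf c r" using \<open>eta/2 > 0\<close> unfolding continuous_within_eps_delta Pf_def by blast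
      then show ?thesis using that by blast
    next
      assume "continuous (at c within {a..b}) g"
      then obtain r where "0 < r" "Pg c r" using \<open>eta/2 > 0\<close> unfolding continuous_within_eps_delta Pg_def by blast
      then show ?thesis using that by blast
    qed
    then have "ball c r \<in> Gs" using c unfolding Gs_def by blast
    moreover have "c \<in> ball c r" using r by simp
    ultimately show "c \<in> \<Union>Gs" by blast
  qed
  have opn: "\<And>G. G \<in> Gs \<Longrightarrow> open G" unfolding Gs_def by auto
  obtain e where e: "0 < e" "\<And>z. z \<in> {a..b} \<Longrightarrow> \<exists>G\<in>Gs. ball z e \<subseteq> G"
    using Heine_Borel_lemma[OF compact_Icc cover opn] by blast
  show ?thesis
  proof (intro exI[of _ e] conjI allI impI)
    show "0 < e" by (rule e(1))
    fix s t assume st: "a \<le> s \<and> s \<le> t \<and> t \<le> b \<and> t - s < e"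
    then have "s \<in> {a..b}" by simp
    then obtain G where G: "G \<in> Gs" "ball s e \<subseteq> G" using e(2) by blast
    then obtain c r where cr: "G = ball c r" "c \<in> {a..b}" "0 < r" "Pf c r \<or> Pg c r"
      unfolding Gs_def by blast
    have sub: "u \<in> {a..b} \<and> dist u c < r" if "u \<in> {s..t}" for u
    proof -
      have "dist s u < e" using that st by (simp add: dist_real_def)
      then have "u \<in> ball c r" using G(2) cr(1) by auto
      then show ?thesis using that st by (auto simp: dist_commute)
    qed
    from cr(4) show "(\<forall>u\<in>{s..t}. \<forall>v\<in>{s..t}. \<bar>f v - f u\<bar> \<le> eta) \<or> (\<forall>u\<in>{s..t}. \<forall>v\<in>{s..t}. \<bar>g v - g u\<bar> \<le> eta)"
    proof
      assume P: "Pf c r"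
      have "\<bar>f v - f u\<bar> \<le> eta" if "u \<in> {s..t}" "v \<in> {s..t}" for u v
      proof -
        have "\<bar>f u - f c\<bar> < eta/2" "\<bar>f v - f c\<bar> < eta/2"
          using P sub[OF that(1)] sub[OF that(2)] unfolding Pf_def dist_real_def by auto
        then show ?thesis by linarith
      qed
      then show ?thesis by blast
    next
      assume P: "Pg c r"
      have "\<bar>g v - g u\<bar> \<le> eta" if "u \<in> {s..t}" "v \<in> {s..t}" for u v
      proof -
        have "\<bar>g u - g c\<bar> < eta/2" "\<bar>g v - g c\<bar> < eta/2"
          using P sub[OF that(1)] sub[OF that(2)] unfolding Pg_def dist_real_def by auto
        then show ?thesis by linarith
      qed
      then show ?thesis by blast
    qed
  qed
qed


definition KF :: "real \<Rightarrow> real \<Rightarrow> real" where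
  "KF p q = GK (1/q) (1/p+1/q) (2 powr (1/p+1/q)) + 1"
definition KG :: "real \<Rightarrow> real \<Rightarrow> real" where
  "KG p q = GK (1/p) (1/q+1/p) (2 powr (1/q+1/p)) + 1"

lemma GK_pos:
  assumes "0 \<le> s" "s < 1" "1 < th" "0 \<le> c"
  shows "0 \<le> GK s th c"
proof -
  have "0 < 1/(1-s)" using assms by simp
  moreover have "0 \<le> c * 2 powr (th-1) * th/(th-1)" using assms by simp
  ultimately show ?thesis unfolding GK_def by linarith
qed

lemma KF_pos: "1 < p \<Longrightarrow> 1 < q \<Longrightarrow> 1 < 1/p + 1/q \<Longrightarrow> 0 \<le> KF p q"
  unfolding KF_def using GK_pos[of "1/q" "1/p+1/q" "2 powr (1/p+1/q)"] by simp
lemma KG_pos: "1 < p \<Longrightarrow> 1 < q \<Longrightarrow> 1 < 1/p + 1/q \<Longrightarrow> 0 \<le> KG p q"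
  unfolding KG_def using GK_pos[of "1/p" "1/q+1/p" "2 powr (1/q+1/p)"] by (simp add: add.commute)

lemma cell_bound:
  fixes f g :: "real \<Rightarrow> real"
  assumes p: "1 < p" and q: "1 < q" and th: "1 < 1/p + 1/q"
    and finf: "finite_rvar p f a b" and fing: "finite_rvar q g a b"
    and st: "a \<le> s" "s < t" "t \<le> b" and eta: "0 \<le> eta"
    and osc: "(\<forall>u\<in>{s..t}. \<forall>v\<in>{s..t}. \<bar>f v - f u\<bar> \<le> eta) \<or> (\<forall>u\<in>{s..t}. \<forall>v\<in>{s..t}. \<bar>g v - g u\<bar> \<le> eta)"
    and tp: "tagged_partition s t z mz L" and L: "0 < L" and c0: "c0 \<in> {s..t}"
  shows "\<bar>RS_sum f g z mz L - f c0 * (g t - g s)\<bar>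
     \<le> (KF p q * eta powr (1 + p/q - p) + KG p q * eta powr (1 + q/p - q)) * (rvar p f s t + rvar q g s t)"
proof -
  have ff: "finite_rvar p f s t" using finite_rvar_sub[OF finf] st by simp
  have fg: "finite_rvar q g s t" using finite_rvar_sub[OF fing] st by simp
  define Vf where "Vf = rvar p f s t"
  define Vg where "Vg = rvar q g s t"
  have BF: "\<forall>z\<in>rvar_sums p f s t. z \<le> Vf" using rvar_upper[OF ff] unfolding Vf_def by blast
  have BG: "\<forall>z\<in>rvar_sums q g s t. z \<le> Vg" using rvar_upper[OF fg] unfolding Vg_def by blast
  have Vf0: "0 \<le> Vf" unfolding Vf_def using rvar_nonneg[OF ff] st by simp
  have Vg0: "0 \<le> Vg" unfolding Vg_def using rvar_nonneg[OF fg] st by simp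
  have OFv: "\<forall>u\<in>{s..t}. \<forall>v\<in>{s..t}. \<bar>f v - f u\<bar> \<le> Vf powr (1/p)"
    using BF_single[of p f s t Vf] BF st p by auto
  have OGv: "\<forall>u\<in>{s..t}. \<forall>v\<in>{s..t}. \<bar>g v - g u\<bar> \<le> Vg powr (1/q)"
    using BF_single[of q g s t Vg] BG st q by auto
  have KF0: "0 \<le> KF p q" and KG0: "0 \<le> KG p q" using KF_pos[OF p q th] KG_pos[OF p q th] by auto
  have t1: "0 \<le> KF p q * eta powr (1 + p/q - p) * (Vf + Vg)" using KF0 Vf0 Vg0 by simp
  have t2: "0 \<le> KG p q * eta powr (1 + q/p - q) * (Vf + Vg)" using KG0 Vf0 Vg0 by simp
  from osc show ?thesis
  proof
    assume O: "\<forall>u\<in>{s..t}. \<forall>v\<in>{s..t}. \<bar>f v - f u\<bar> \<le> eta"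
    have "\<bar>RS_sum f g z mz L - f c0 * (g t - g s)\<bar> \<le> KF p q * eta powr (1 + p/q - p) * Vf powr (1 - 1/q) * Vg powr (1/q)"
      unfolding KF_def by (rule local_f[OF p q th BF BG O OGv tp L c0])
    also have "\<dots> = KF p q * eta powr (1 + p/q - p) * (Vf powr (1 - 1/q) * Vg powr (1 - (1 - 1/q)))" by simp
    also have "\<dots> \<le> KF p q * eta powr (1 + p/q - p) * (Vf + Vg)"
      using KF0 Vf0 Vg0 q by (intro mult_left_mono powr_interp_le_sum) auto
    finally show ?thesis unfolding Vf_def[symmetric] Vg_def[symmetric] using t2 by (simp add: algebra_simps)
  next
    assume O: "\<forall>u\<in>{s..t}. \<forall>v\<in>{s..t}. \<bar>g v - g u\<bar> \<le> eta"
    have "\<bar>RS_sum f g z mz L - f c0 * (g t - g s)\<bar> \<le> KG p q * eta powr (1 + q/p - q) * Vg powr (1 - 1/p) * Vf powr (1/p)"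
      unfolding KG_def by (rule local_g[OF p q th BF BG OFv O tp L c0])
    also have "\<dots> = KG p q * eta powr (1 + q/p - q) * (Vg powr (1 - 1/p) * Vf powr (1 - (1 - 1/p)))" by simp
    also have "\<dots> \<le> KG p q * eta powr (1 + q/p - q) * (Vg + Vf)"
      using KG0 Vf0 Vg0 p by (intro mult_left_mono powr_interp_le_sum) auto
    finally show ?thesis unfolding Vf_def[symmetric] Vg_def[symmetric] using t1 by (simp add: algebra_simps)
  qed
qed


lemma small_eta:
  fixes bf bg KF KG W e :: real
  assumes "0 < bf" "0 < bg" "0 < e"
  shows "\<exists>eta>0. (KF * eta powr bf + KG * eta powr bg) * (2 * W + 1) < e"
proof -
  have ev: "\<forall>\<^sub>F x in at_right (0::real). 0 \<le> x" using eventually_at_right_less[of 0]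
    by (rule eventually_mono) simp
  have l1: "((\<lambda>x::real. x powr bf) \<longlongrightarrow> 0) (at_right 0)"
    by (rule tendsto_zero_powrI[OF tendsto_ident_at tendsto_const ev assms(1)])
  have l2: "((\<lambda>x::real. x powr bg) \<longlongrightarrow> 0) (at_right 0)"
    by (rule tendsto_zero_powrI[OF tendsto_ident_at tendsto_const ev assms(2)])
  have "((\<lambda>x. (KF * x powr bf + KG * x powr bg) * (2 * W + 1)) \<longlongrightarrow> (KF * 0 + KG * 0) * (2 * W + 1)) (at_right 0)"
    by (intro tendsto_intros l1 l2)
  then have "\<forall>\<^sub>F x in at_right 0. (KF * x powr bf + KG * x powr bg) * (2 * W + 1) < e"
    using assms(3) by (intro order_tendstoD(2)) auto
  then obtain b where b: "0 < b" "\<forall>y>0. y < b \<longrightarrow> (KF * y powr bf + KG * y powr bg) * (2 * W + 1) < e"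
    unfolding eventually_at_right_field by blast
  show ?thesis using b by (intro exI[of _ "b/2"]) auto
qed

lemma cauchy_sums:
  fixes f g :: "real \<Rightarrow> real"
  assumes p: "1 < p" and q: "1 < q" and th: "1 < 1/p + 1/q"
    and finf: "finite_rvar p f a b" and fing: "finite_rvar q g a b"
    and cont: "\<forall>t\<in>{a..b}. continuous (at t within {a..b}) f \<or> continuous (at t within {a..b}) g"
    and e: "0 < e"
  shows "\<exists>d>0. \<forall>x nu n x' nu' n'. tagged_partition a b x nu n \<and> mesh_less x n d \<and>
      tagged_partition a b x' nu' n' \<and> mesh_less x' n' d \<longrightarrow>
      \<bar>RS_sum f g x nu n - RS_sum f g x' nu' n'\<bar> < e"
proof -
  define bf where "bf = 1 + p/q - p"
  define bg where "bg = 1 + q/p - q"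
  have bf0: "0 < bf" unfolding bf_def using th p q by (simp add: field_simps)
  have bg0: "0 < bg" unfolding bg_def using th p q by (simp add: field_simps)
  define W where "W = rvar p f a b + rvar q g a b"
  obtain eta where eta: "0 < eta" "(KF p q * eta powr bf + KG p q * eta powr bg) * (2 * W + 1) < e"
    using small_eta[OF bf0 bg0 e] by blast
  define M where "M = KF p q * eta powr bf + KG p q * eta powr bg"
  have M0: "0 \<le> M" unfolding M_def using KF_pos[OF p q th] KG_pos[OF p q th] by simp
  obtain d where d: "0 < d" "\<forall>s t. a \<le> s \<and> s \<le> t \<and> t \<le> b \<and> t - s < d \<longrightarrow>
     (\<forall>u\<in>{s..t}. \<forall>v\<in>{s..t}. \<bar>f v - f u\<bar> \<le> eta) \<or> (\<forall>u\<in>{s..t}. \<forall>v\<in>{s..t}. \<bar>g v - g u\<bar> \<le> eta)"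
    using lebesgue_cells[OF cont eta(1)] by blast
  have coarse: "\<bar>RS_sum f g y y N - RS_sum f g x nu n\<bar> \<le> M * W"
    if tpP: "tagged_partition a b x nu n" and ms: "mesh_less x n d" and tpQ: "tagged_partition a b y y N"
      and sub: "\<forall>i\<le>n. \<exists>j\<le>N. y j = x i" for x nu n y N
  proof -
    note R = tp_ranges[OF tpP]
    have tg: "\<forall>i<n. x i \<le> nu i \<and> nu i \<le> x (Suc i)" and x0: "x 0 = a" and xn: "x n = b"
      using tpP unfolding tagged_partition_def by auto
    define be where "be i = M * (rvar p f (x i) (x (Suc i)) + rvar q g (x i) (x (Suc i)))" for i
    have loc: "\<forall>i<n. \<forall>z mz L. tagged_partition (x i) (x (Suc i)) z mz L \<and> 0 < L \<longrightarrow>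
        \<bar>RS_sum f g z mz L - f (nu i) * (g (x (Suc i)) - g (x i))\<bar> \<le> be i"
    proof (intro allI impI)
      fix i z mz L assume i: "i < n" and h: "tagged_partition (x i) (x (Suc i)) z mz L \<and> 0 < L"
      have st: "a \<le> x i" "x i < x (Suc i)" "x (Suc i) \<le> b" using R i by auto
      have "x (Suc i) - x i < d" using ms i unfolding mesh_less_def by blast
      then have "a \<le> x i \<and> x i \<le> x (Suc i) \<and> x (Suc i) \<le> b \<and> x (Suc i) - x i < d" using st by simp
      then have osc: "(\<forall>u\<in>{x i..x (Suc i)}. \<forall>v\<in>{x i..x (Suc i)}. \<bar>f v - f u\<bar> \<le> eta) \<or>
           (\<forall>u\<in>{x i..x (Suc i)}. \<forall>v\<in>{x i..x (Suc i)}. \<bar>g v - g u\<bar> \<le> eta)"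
        by (rule d(2)[rule_format])
      have c0: "nu i \<in> {x i..x (Suc i)}" using tg i by auto
      have eta0: "0 \<le> eta" using eta(1) by simp
      have tpz: "tagged_partition (x i) (x (Suc i)) z mz L" and L0: "0 < L" using h by auto
      have "\<bar>RS_sum f g z mz L - f (nu i) * (g (x (Suc i)) - g (x i))\<bar>
        \<le> (KF p q * eta powr (1 + p/q - p) + KG p q * eta powr (1 + q/p - q)) * (rvar p f (x i) (x (Suc i)) + rvar q g (x i) (x (Suc i)))"
        by (rule cell_bound[OF p q th finf fing st(1) st(2) st(3) eta0 osc tpz L0 c0])
      then show "\<bar>RS_sum f g z mz L - f (nu i) * (g (x (Suc i)) - g (x i))\<bar> \<le> be i"
        unfolding be_def M_def bf_def bg_def .
    qed
    have "\<bar>RS_sum f g y y N - RS_sum f g x nu n\<bar> \<le> (\<Sum>i<n. be i)"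
      by (rule coarsen[OF tpP tpQ sub loc])
    also have "(\<Sum>i<n. be i) = M * ((\<Sum>i<n. rvar p f (x i) (x (Suc i))) + (\<Sum>i<n. rvar q g (x i) (x (Suc i))))"
    proof -
      have "(\<Sum>i<n. be i) = M * (\<Sum>i<n. rvar p f (x i) (x (Suc i)) + rvar q g (x i) (x (Suc i)))"
        unfolding be_def by (rule sum_distrib_left[symmetric])
      also have "(\<Sum>i<n. rvar p f (x i) (x (Suc i)) + rvar q g (x i) (x (Suc i)))
          = (\<Sum>i<n. rvar p f (x i) (x (Suc i))) + (\<Sum>i<n. rvar q g (x i) (x (Suc i)))"
        by (rule sum.distrib)
      finally show ?thesis .
    qed
    also have "\<dots> \<le> M * W"
    proof -
      have le: "\<forall>i<n. x i \<le> x (Suc i)" using R(3) by (auto simp: less_imp_le)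
      have "(\<Sum>i<n. rvar p f (x i) (x (Suc i))) \<le> rvar p f (x 0) (x n)"
        using p R(1) le by (intro rvar_partition_superadd[OF finf]) auto
      moreover have "(\<Sum>i<n. rvar q g (x i) (x (Suc i))) \<le> rvar q g (x 0) (x n)"
        using q R(1) le by (intro rvar_partition_superadd[OF fing]) auto
      ultimately show ?thesis unfolding W_def x0 xn using M0 by (intro mult_left_mono) auto
    qed
    finally show ?thesis .
  qed
  show ?thesis
  proof (intro exI[of _ d] conjI allI impI)
    show "0 < d" by (rule d(1))
    fix x nu n x' nu' n'
    assume h: "tagged_partition a b x nu n \<and> mesh_less x n d \<and> tagged_partition a b x' nu' n' \<and> mesh_less x' n' d"
    then have h1: "tagged_partition a b x nu n" "mesh_less x n d" and h2: "tagged_partition a b x' nu' n'" "mesh_less x' n' d"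
      by auto
    obtain y N where Q: "tagged_partition a b y y N" "\<forall>i\<le>n. \<exists>j\<le>N. y j = x i" "\<forall>i\<le>n'. \<exists>j\<le>N. y j = x' i"
      using common_refinement[OF h1(1) h2(1)] by blast
    have c1: "\<bar>RS_sum f g y y N - RS_sum f g x nu n\<bar> \<le> M * W" by (rule coarse[OF h1 Q(1) Q(2)])
    have c2: "\<bar>RS_sum f g y y N - RS_sum f g x' nu' n'\<bar> \<le> M * W" by (rule coarse[OF h2 Q(1) Q(3)])
    have "a \<le> x 0 \<and> x 0 \<le> b" using tp_ranges(1)[OF h1(1)] by blast
    then have ab: "a \<le> b" by linarith
    have W0: "0 \<le> W" unfolding W_def using rvar_nonneg[OF finf ab] rvar_nonneg[OF fing ab] by simp
    have "M * W * 2 \<le> M * (2 * W + 1)" using M0 by (simp add: algebra_simps)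
    moreover have "M * (2 * W + 1) < e" using eta(2) unfolding M_def by simp
    ultimately show "\<bar>RS_sum f g x nu n - RS_sum f g x' nu' n'\<bar> < e" using c1 c2 by linarith
  qed
qed


lemma mesh_small:
  fixes a b d :: real
  assumes ab: "a < b" and d: "0 < d"
  shows "\<exists>M. \<forall>m\<ge>M. (b - a) / real (Suc m) < d"
proof -
  obtain M where M: "(b - a) / d < real M" using reals_Archimedean2 by blast
  show ?thesis
  proof (intro exI[of _ M] allI impI)
    fix m assume m: "M \<le> m"
    have "(b - a) / d < real (Suc m)" using M m by simp
    then have "b - a < d * real (Suc m)" using d by (simp add: field_simps)
    then show "(b - a) / real (Suc m) < d" by (simp add: field_simps)
  qed
qed

theorem corollary2:
  fixes p q :: real
  assumes "p > 1" and "q > 1" and "1 / p + 1 / q > 1"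
  shows "\<exists>C::real. \<forall>(a::real) (b::real) (f::real \<Rightarrow> real) (g::real \<Rightarrow> real).
    a < b \<and>
    (\<forall>t\<in>{a..b}. continuous (at t within {a..b}) f \<or> continuous (at t within {a..b}) g) \<and>
    finite_rvar p f a b \<and> finite_rvar q g a b \<longrightarrow>
    (\<exists>I. RS_has_integral f g a b I \<and>
      \<bar>I - f a * (g b - g a)\<bar> \<le>
        C * rvar_norm p f a b powr (p - p / q) * osc_norm f a b powr (1 + p / q - p)
          * rvar_norm q g a b)"
proof (rule exI[of _ "KF p q"], intro allI impI)
  have p: "1 < p" and q: "1 < q" and th: "1 < 1/p + 1/q" using assms by auto
  fix a b :: real and f g :: "real \<Rightarrow> real"
  assume H: "a < b \<and>
    (\<forall>t\<in>{a..b}. continuous (at t within {a..b}) f \<or> continuous (at t within {a..b}) g) \<and>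
    finite_rvar p f a b \<and> finite_rvar q g a b"
  then have ab: "a < b" and cont: "\<forall>t\<in>{a..b}. continuous (at t within {a..b}) f \<or> continuous (at t within {a..b}) g"
    and finf: "finite_rvar p f a b" and fing: "finite_rvar q g a b" by auto
  define Vf where "Vf = rvar p f a b"
  define Vg where "Vg = rvar q g a b"
  define om where "om = osc_norm f a b"
  have BF: "\<forall>z\<in>rvar_sums p f a b. z \<le> Vf" using rvar_upper[OF finf] unfolding Vf_def by blast
  have BG: "\<forall>z\<in>rvar_sums q g a b. z \<le> Vg" using rvar_upper[OF fing] unfolding Vg_def by blast
  have Vf0: "0 \<le> Vf" unfolding Vf_def using rvar_nonneg[OF finf] ab by simp
  have OG: "\<forall>s\<in>{a..b}. \<forall>t\<in>{a..b}. \<bar>g t - g s\<bar> \<le> Vg powr (1/q)"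
    using BF_single[of q g a b Vg] BG ab q by auto
  define OS where "OS = {\<bar>f t - f s\<bar> | s t. a \<le> s \<and> s \<le> t \<and> t \<le> b}"
  have OSb: "bdd_above OS"
    unfolding bdd_above_def
  proof (intro exI[of _ "Vf powr (1/p)"] ballI)
    fix z assume "z \<in> OS"
    then obtain s t where "z = \<bar>f t - f s\<bar>" "a \<le> s" "s \<le> t" "t \<le> b" unfolding OS_def by blast
    then show "z \<le> Vf powr (1/p)" using BF_single[of p f a b Vf s t] BF ab p by auto
  qed
  have OF: "\<forall>s\<in>{a..b}. \<forall>t\<in>{a..b}. \<bar>f t - f s\<bar> \<le> om"
  proof (intro ballI)
    fix s t assume st: "s \<in> {a..b}" "t \<in> {a..b}"
    show "\<bar>f t - f s\<bar> \<le> om"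
    proof (cases "s \<le> t")
      case True
      then have "\<bar>f t - f s\<bar> \<in> OS" using st unfolding OS_def by auto
      then show ?thesis using OSb unfolding om_def osc_norm_def OS_def[symmetric] by (rule cSup_upper)
    next
      case False
      then have "\<bar>f s - f t\<bar> \<in> OS" using st unfolding OS_def
        by (intro CollectI exI[of _ t] exI[of _ s]) auto
      then have "\<bar>f s - f t\<bar> \<le> om" using OSb unfolding om_def osc_norm_def OS_def[symmetric] by (rule cSup_upper)
      then show ?thesis by (simp add: abs_minus_commute)
    qed
  qed
  define B where "B = KF p q * om powr (1 + p/q - p) * Vf powr (1 - 1/q) * Vg powr (1/q)"
  have PB: "\<bar>RS_sum f g x nu n - f a * (g b - g a)\<bar> \<le> B"
    if tp: "tagged_partition a b x nu n" and n: "0 < n" for x nu n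
    unfolding B_def KF_def
    by (rule local_f[OF p q th BF BG OF OG tp n]) (use ab in auto)
  have RHS: "KF p q * rvar_norm p f a b powr (p - p / q) * osc_norm f a b powr (1 + p / q - p) * rvar_norm q g a b = B"
  proof -
    have e: "1/p * (p - p/q) = 1 - 1/q" using p by (simp add: field_simps)
    have "rvar_norm p f a b powr (p - p / q) = Vf powr (1 - 1/q)"
      unfolding rvar_norm_def Vf_def[symmetric] by (simp only: powr_powr e)
    then show ?thesis unfolding B_def om_def[symmetric] rvar_norm_def Vg_def[symmetric] by (simp add: mult_ac)
  qed
  define ux where "ux m i = a + real i * (b - a) / real m" for m i
  define sq where "sq k = RS_sum f g (ux (Suc k)) (ux (Suc k)) (Suc k)" for k
  have tpu: "tagged_partition a b (ux (Suc k)) (ux (Suc k)) (Suc k)" for k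
    using uniform_partition(1)[OF ab, of "Suc k"] unfolding ux_def by simp
  have meshu: "mesh_less (ux (Suc k)) (Suc k) d" if "(b - a) / real (Suc k) < d" for k d
    using uniform_partition(2)[OF ab, of "Suc k"] that unfolding ux_def mesh_less_def by simp
  note CS = cauchy_sums[OF p q th finf fing cont]
  have "Cauchy sq"
  proof (rule CauchyI)
    fix e :: real assume e: "0 < e"
    obtain d where d: "0 < d" "\<forall>x nu n x' nu' n'. tagged_partition a b x nu n \<and> mesh_less x n d \<and>
      tagged_partition a b x' nu' n' \<and> mesh_less x' n' d \<longrightarrow> \<bar>RS_sum f g x nu n - RS_sum f g x' nu' n'\<bar> < e"
      using CS[OF e] by blast
    obtain M where M: "\<forall>m\<ge>M. (b - a) / real (Suc m) < d" using mesh_small[OF ab d(1)] by blast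
    show "\<exists>M. \<forall>m\<ge>M. \<forall>n\<ge>M. norm (sq m - sq n) < e"
    proof (intro exI[of _ M] allI impI)
      fix m n assume mn: "M \<le> m" "M \<le> n"
      have "\<bar>sq m - sq n\<bar> < e" unfolding sq_def
        using d(2) tpu meshu M mn by blast
      then show "norm (sq m - sq n) < e" by simp
    qed
  qed
  then obtain I where I: "sq \<longlonglongrightarrow> I" using real_Cauchy_convergent convergent_def by blast
  show "\<exists>I. RS_has_integral f g a b I \<and>
      \<bar>I - f a * (g b - g a)\<bar> \<le>
        KF p q * rvar_norm p f a b powr (p - p / q) * osc_norm f a b powr (1 + p / q - p) * rvar_norm q g a b"
  proof (intro exI[of _ I] conjI)
    show "RS_has_integral f g a b I"
      unfolding RS_has_integral_def
    proof (intro allI impI)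
      fix e :: real assume e: "0 < e"
      then have e2: "0 < e/2" by simp
      obtain d where d: "0 < d" "\<forall>x nu n x' nu' n'. tagged_partition a b x nu n \<and> mesh_less x n d \<and>
        tagged_partition a b x' nu' n' \<and> mesh_less x' n' d \<longrightarrow> \<bar>RS_sum f g x nu n - RS_sum f g x' nu' n'\<bar> < e/2"
        using CS[OF e2] by blast
      obtain M where M: "\<forall>m\<ge>M. (b - a) / real (Suc m) < d" using mesh_small[OF ab d(1)] by blast
      show "\<exists>d>0. \<forall>x nu l. tagged_partition a b x nu l \<and> mesh_less x l d \<longrightarrow> \<bar>RS_sum f g x nu l - I\<bar> < e"
      proof (intro exI[of _ d] conjI allI impI)
        show "0 < d" by (rule d(1))
        fix x nu l assume P: "tagged_partition a b x nu l \<and> mesh_less x l d"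
        have ev: "\<forall>\<^sub>F k in sequentially. \<bar>RS_sum f g x nu l - sq k\<bar> \<le> e/2"
        proof (rule eventually_sequentiallyI[of M])
          fix k assume k: "M \<le> k"
          have "\<bar>RS_sum f g x nu l - sq k\<bar> < e/2" unfolding sq_def
            using d(2) P tpu meshu M k by blast
          then show "\<bar>RS_sum f g x nu l - sq k\<bar> \<le> e/2" by simp
        qed
        have "((\<lambda>k. \<bar>RS_sum f g x nu l - sq k\<bar>) \<longlongrightarrow> \<bar>RS_sum f g x nu l - I\<bar>) sequentially"
          by (intro tendsto_intros I)
        then have "\<bar>RS_sum f g x nu l - I\<bar> \<le> e/2" using ev by (rule tendsto_upperbound) simp
        then show "\<bar>RS_sum f g x nu l - I\<bar> < e" using e by linarith
      qed
    qed
    have ev: "\<forall>\<^sub>F k in sequentially. \<bar>sq k - f a * (g b - g a)\<bar> \<le> B"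
      by (rule always_eventually) (use PB tpu in \<open>auto simp: sq_def\<close>)
    have "((\<lambda>k. \<bar>sq k - f a * (g b - g a)\<bar>) \<longlongrightarrow> \<bar>I - f a * (g b - g a)\<bar>) sequentially"
      by (intro tendsto_intros I)
    then have "\<bar>I - f a * (g b - g a)\<bar> \<le> B" using ev by (rule tendsto_upperbound) simp
    then show "\<bar>I - f a * (g b - g a)\<bar> \<le> KF p q * rvar_norm p f a b powr (p - p / q) * osc_norm f a b powr (1 + p / q - p) * rvar_norm q g a b"
      unfolding RHS .
  qed
qed

end
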